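(* For every $2n_1\in\{24,26,28,30,32\}$, every $2n_2\in\{34,36,38\}$ and every integer $s\ge1$, there exist a binary Euclidean formally self-dual LCD $[4sn_1,2sn_1,6]_2$ code and a binary Euclidean formally self-dual LCD $[4sn_2,2sn_2,7]_2$ code. In addition, binary Euclidean formally self-dual LCD $[44s,22s,5]_2$, $[80s,40s,8]_2$ and $[100s,50s,9]_2$ codes exist for every integer $s\ge1$.
   Context: A binary linear code $\mathcal{C}$ is Euclidean LCD if $\mathcal{C}\cap\mathcal{C}^{\perp_E}=\{0\}$, where $\perp_E$ is the dual with respect to $\sum_ix_iy_i$; it is Euclidean formally self-dual if it has the same weight distribution as $\mathcal{C}^{\perp_E}$. $[n,k,d]_2$ denotes length $n$, dimension $k$, minimum distance $d$. *)

theory Defs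
  imports Main
begin

text \<open>Binary vectors of length n are modelled as functions nat => bool that are
False outside {..<n} (True = 1 in GF(2)). Addition in GF(2)^n is pointwise xor.\<close>

definition bvecs :: "nat \<Rightarrow> (nat \<Rightarrow> bool) set" where
  "bvecs n = {x. \<forall>i. n \<le> i \<longrightarrow> \<not> x i}"

definition bzero :: "nat \<Rightarrow> bool" where
  "bzero = (\<lambda>i. False)"

definition badd :: "(nat \<Rightarrow> bool) \<Rightarrow> (nat \<Rightarrow> bool) \<Rightarrow> (nat \<Rightarrow> bool)" where
  "badd x y = (\<lambda>i. x i \<noteq> y i)"

text \<open>Binary linear code of length n: a subspace of GF(2)^n (over GF(2),
closure under addition and containing 0 suffices).\<close>
definition binary_linear_code :: "nat \<Rightarrow> (nat \<Rightarrow> bool) set \<Rightarrow> bool" where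
  "binary_linear_code n C \<longleftrightarrow> C \<subseteq> bvecs n \<and> bzero \<in> C \<and>
     (\<forall>x\<in>C. \<forall>y\<in>C. badd x y \<in> C)"

definition wt :: "nat \<Rightarrow> (nat \<Rightarrow> bool) \<Rightarrow> nat" where
  "wt n x = card {i. i < n \<and> x i}"

definition eorth :: "nat \<Rightarrow> (nat \<Rightarrow> bool) \<Rightarrow> (nat \<Rightarrow> bool) \<Rightarrow> bool" where
  "eorth n x y \<longleftrightarrow> even (card {i. i < n \<and> x i \<and> y i})"

definition edual :: "nat \<Rightarrow> (nat \<Rightarrow> bool) set \<Rightarrow> (nat \<Rightarrow> bool) set" where
  "edual n C = {y \<in> bvecs n. \<forall>x\<in>C. eorth n x y}"

text \<open>Minimum distance d: minimum weight of a nonzero codeword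
(equivalent to minimum Hamming distance for linear codes).\<close>
definition min_dist :: "nat \<Rightarrow> (nat \<Rightarrow> bool) set \<Rightarrow> nat" where
  "min_dist n C = Min (wt n ` (C - {bzero}))"

definition is_code_nkd :: "nat \<Rightarrow> nat \<Rightarrow> nat \<Rightarrow> (nat \<Rightarrow> bool) set \<Rightarrow> bool" where
  "is_code_nkd n k d C \<longleftrightarrow> binary_linear_code n C \<and> card C = 2 ^ k  \<comment> \<open>dimension k over GF(2)\<close> \<and>
     C - {bzero} \<noteq> {} \<and> min_dist n C = d"

definition euclidean_LCD :: "nat \<Rightarrow> (nat \<Rightarrow> bool) set \<Rightarrow> bool" where
  "euclidean_LCD n C \<longleftrightarrow> C \<inter> edual n C = {bzero}"

definition euclidean_fsd :: "nat \<Rightarrow> (nat \<Rightarrow> bool) set \<Rightarrow> bool" where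
  "euclidean_fsd n C \<longleftrightarrow>
     (\<forall>w. card {x \<in> C. wt n x = w} = card {x \<in> edual n C. wt n x = w})"

definition fsd_LCD_code_exists :: "nat \<Rightarrow> nat \<Rightarrow> nat \<Rightarrow> bool" where
  "fsd_LCD_code_exists n k d \<longleftrightarrow>
     (\<exists>C. is_code_nkd n k d C \<and> euclidean_LCD n C \<and> euclidean_fsd n C)"

end

theory Submission
  imports Defs
begin


lemma bvecs_repr: "bvecs n = (\<lambda>S i. i \<in> S) ` Pow {..<n}"
proof
  show "bvecs n \<subseteq> (\<lambda>S i. i \<in> S) ` Pow {..<n}"
  proof
    fix x assume x: "x \<in> bvecs n"
    have "x = (\<lambda>i. i \<in> {i. i < n \<and> x i})"
    proof
      fix i show "x i = (i \<in> {i. i < n \<and> x i})"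
        using x unfolding bvecs_def by (cases "i < n") auto
    qed
    thus "x \<in> (\<lambda>S i. i \<in> S) ` Pow {..<n}" by blast
  qed
  show "(\<lambda>S i. i \<in> S) ` Pow {..<n} \<subseteq> bvecs n"
    by (auto simp: bvecs_def)
qed

lemma finite_bvecs[simp]: "finite (bvecs n)"
  by (simp add: bvecs_repr)

lemma card_bvecs: "card (bvecs n) = 2 ^ n"
proof -
  have "inj_on (\<lambda>S i. i \<in> S) (Pow {..<n})"
    by (rule inj_onI) (auto simp: fun_eq_iff)
  hence "card ((\<lambda>S i. i \<in> S) ` Pow {..<n}) = card (Pow {..<n})"
    by (rule card_image)
  thus ?thesis by (simp add: bvecs_repr card_Pow)
qed

lemma bzero_bvecs[simp]: "bzero \<in> bvecs n"
  by (simp add: bvecs_def bzero_def)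

lemma wt_bzero[simp]: "wt n bzero = 0"
  by (simp add: wt_def bzero_def)

lemma card_split:
  "card {i::nat. i < n + m \<and> P i} = card {i. i < n \<and> P i} + card {j. j < m \<and> P (n + j)}"
proof -
  have e: "{i. i < n + m \<and> P i} = {i. i < n \<and> P i} \<union> (\<lambda>j. n + j) ` {j. j < m \<and> P (n + j)}"
  proof (rule set_eqI)
    fix i
    show "i \<in> {i. i < n + m \<and> P i} \<longleftrightarrow> i \<in> {i. i < n \<and> P i} \<union> (\<lambda>j. n + j) ` {j. j < m \<and> P (n + j)}"
    proof (cases "i < n")
      case True thus ?thesis by (auto simp: image_iff)
    next
      case False
      then obtain k where k: "i = n + k" using le_iff_add[of n i] by auto
      have "i \<in> (\<lambda>j. n + j) ` {j. j < m \<and> P (n + j)} \<longleftrightarrow> k \<in> {j. j < m \<and> P (n + j)}"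
        unfolding k by (rule inj_image_mem_iff) (simp add: inj_on_def)
      thus ?thesis using False k by auto
    qed
  qed
  have "card ((\<lambda>j. n + j) ` {j. j < m \<and> P (n + j)}) = card {j. j < m \<and> P (n + j)}"
    by (rule card_image) (simp add: inj_on_def)
  moreover have "{i. i < n \<and> P i} \<inter> (\<lambda>j. n + j) ` {j. j < m \<and> P (n + j)} = {}" by auto
  ultimately show ?thesis unfolding e by (subst card_Un_disjoint) auto
qed

definition cat :: "nat \<Rightarrow> (nat \<Rightarrow> bool) \<Rightarrow> (nat \<Rightarrow> bool) \<Rightarrow> nat \<Rightarrow> bool" where
  "cat n x y = (\<lambda>i. if i < n then x i else y (i - n))"

definition lo :: "nat \<Rightarrow> (nat \<Rightarrow> bool) \<Rightarrow> nat \<Rightarrow> bool" where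
  "lo n z = (\<lambda>i. i < n \<and> z i)"

definition hi :: "nat \<Rightarrow> (nat \<Rightarrow> bool) \<Rightarrow> nat \<Rightarrow> bool" where
  "hi n z = (\<lambda>j. z (n + j))"

lemma cat_bvecs: "y \<in> bvecs m \<Longrightarrow> cat n x y \<in> bvecs (n + m)"
  by (auto simp: bvecs_def cat_def)

lemma cat_inj:
  assumes "x \<in> bvecs n" "x' \<in> bvecs n" "cat n x y = cat n x' y'"
  shows "x = x' \<and> y = y'"
proof
  show "x = x'"
  proof
    fix i
    have "cat n x y i = cat n x' y' i" using assms(3) by simp
    thus "x i = x' i"
      using assms(1,2) by (cases "i < n") (auto simp: bvecs_def cat_def)
  qed
  show "y = y'"
  proof
    fix j show "y j = y' j"
      using fun_cong[OF assms(3), of "n + j"] by (simp add: cat_def)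
  qed
qed

lemma cat_lo_hi: "cat n (lo n z) (hi n z) = z"
  by (auto simp: cat_def lo_def hi_def fun_eq_iff)

lemma lo_bvecs: "lo n z \<in> bvecs n"
  by (auto simp: bvecs_def lo_def)

lemma hi_bvecs: "z \<in> bvecs (n + m) \<Longrightarrow> hi n z \<in> bvecs m"
  by (auto simp: bvecs_def hi_def)

lemma lo_cat: "x \<in> bvecs n \<Longrightarrow> lo n (cat n x y) = x"
  by (auto simp: bvecs_def lo_def cat_def fun_eq_iff)

lemma hi_cat: "hi n (cat n x y) = y"
  by (auto simp: hi_def cat_def fun_eq_iff)

lemma wt_cat: "wt (n + m) (cat n x y) = wt n x + wt m y"
proof -
  have e1: "{i. i < n \<and> cat n x y i} = {i. i < n \<and> x i}" by (auto simp: cat_def)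
  have e2: "{j. j < m \<and> cat n x y (n + j)} = {j. j < m \<and> y j}" by (auto simp: cat_def)
  show ?thesis unfolding wt_def card_split e1 e2 ..
qed

lemma eorth_cat: "eorth (n + m) (cat n x y) (cat n x' y') \<longleftrightarrow> (eorth n x x' \<longleftrightarrow> eorth m y y')"
proof -
  have e1: "{i. i < n \<and> cat n x y i \<and> cat n x' y' i} = {i. i < n \<and> x i \<and> x' i}" by (auto simp: cat_def)
  have e2: "{j. j < m \<and> cat n x y (n + j) \<and> cat n x' y' (n + j)} = {j. j < m \<and> y j \<and> y' j}" by (auto simp: cat_def)
  show ?thesis unfolding eorth_def card_split[where P="\<lambda>i. cat n x y i \<and> cat n x' y' i"] e1 e2 by simp
qed

lemma badd_cat: "badd (cat n x y) (cat n x' y') = cat n (badd x x') (badd y y')"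
  by (auto simp: badd_def cat_def fun_eq_iff)

lemma bzero_cat: "cat n bzero bzero = bzero"
  by (auto simp: bzero_def cat_def fun_eq_iff)

lemma eorth_sym: "eorth n x y = eorth n y x"
proof -
  have "{i. i < n \<and> x i \<and> y i} = {i. i < n \<and> y i \<and> x i}" by blast
  thus ?thesis by (simp add: eorth_def)
qed

lemma eorth_zero[simp]: "eorth n bzero y" "eorth n y bzero"
  by (simp_all add: eorth_def bzero_def)

definition dsum :: "nat \<Rightarrow> (nat \<Rightarrow> bool) set \<Rightarrow> (nat \<Rightarrow> bool) set \<Rightarrow> (nat \<Rightarrow> bool) set" where
  "dsum n C D = (\<lambda>(x, y). cat n x y) ` (C \<times> D)"

lemma dsum_iff: "z \<in> dsum n C D \<longleftrightarrow> (\<exists>x\<in>C. \<exists>y\<in>D. z = cat n x y)"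
  by (auto simp: dsum_def)

lemma inj_cat: "C \<subseteq> bvecs n \<Longrightarrow> inj_on (\<lambda>(x, y). cat n x y) (C \<times> D)"
  by (rule inj_onI) (auto dest: cat_inj)

lemma card_dsum: "C \<subseteq> bvecs n \<Longrightarrow> card (dsum n C D) = card C * card D"
  unfolding dsum_def by (simp add: card_image inj_cat card_cartesian_product)

lemma dsum_edual:
  assumes C: "C \<subseteq> bvecs n" "bzero \<in> C" and D: "D \<subseteq> bvecs m" "bzero \<in> D"
  shows "edual (n + m) (dsum n C D) = dsum n (edual n C) (edual m D)"
proof
  show "edual (n + m) (dsum n C D) \<subseteq> dsum n (edual n C) (edual m D)"
  proof
    fix z assume z: "z \<in> edual (n + m) (dsum n C D)"
    hence zb: "z \<in> bvecs (n + m)" and zo: "\<forall>w\<in>dsum n C D. eorth (n + m) w z"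
      by (auto simp: edual_def)
    have "lo n z \<in> edual n C"
    proof -
      { fix x assume "x \<in> C"
        hence "cat n x bzero \<in> dsum n C D" using D by (auto simp: dsum_iff)
        hence "eorth (n + m) (cat n x bzero) (cat n (lo n z) (hi n z))" using zo cat_lo_hi by metis
        hence "eorth n x (lo n z)" by (simp add: eorth_cat) }
      thus ?thesis using lo_bvecs by (auto simp: edual_def)
    qed
    moreover have "hi n z \<in> edual m D"
    proof -
      { fix y assume "y \<in> D"
        hence "cat n bzero y \<in> dsum n C D" using C by (auto simp: dsum_iff)
        hence "eorth (n + m) (cat n bzero y) (cat n (lo n z) (hi n z))" using zo cat_lo_hi by metis
        hence "eorth m y (hi n z)" by (simp add: eorth_cat) }
      thus ?thesis using hi_bvecs[OF zb] by (auto simp: edual_def)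
    qed
    moreover have "z = cat n (lo n z) (hi n z)" by (simp add: cat_lo_hi)
    ultimately show "z \<in> dsum n (edual n C) (edual m D)"
      unfolding dsum_iff by blast
  qed
  show "dsum n (edual n C) (edual m D) \<subseteq> edual (n + m) (dsum n C D)"
  proof
    fix z assume "z \<in> dsum n (edual n C) (edual m D)"
    then obtain u v where u: "u \<in> edual n C" and v: "v \<in> edual m D" and z: "z = cat n u v"
      by (auto simp: dsum_iff)
    have "z \<in> bvecs (n + m)" using v z cat_bvecs by (auto simp: edual_def)
    moreover have "\<forall>w\<in>dsum n C D. eorth (n + m) w z"
      using u v z by (auto simp: dsum_iff edual_def eorth_cat)
    ultimately show "z \<in> edual (n + m) (dsum n C D)" by (simp add: edual_def)
  qed
qed

lemma dsum_mono: "C \<subseteq> C' \<Longrightarrow> D \<subseteq> D' \<Longrightarrow> dsum n C D \<subseteq> dsum n C' D'"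
  unfolding dsum_def by (intro image_mono Sigma_mono) auto

lemma dsum_Int:
  assumes "C \<subseteq> bvecs n" "C' \<subseteq> bvecs n"
  shows "dsum n C D \<inter> dsum n C' D' = dsum n (C \<inter> C') (D \<inter> D')"
proof
  show "dsum n C D \<inter> dsum n C' D' \<subseteq> dsum n (C \<inter> C') (D \<inter> D')"
  proof
    fix z assume "z \<in> dsum n C D \<inter> dsum n C' D'"
    then obtain x y x' y' where "x \<in> C" "y \<in> D" "x' \<in> C'" "y' \<in> D'" "z = cat n x y" "z = cat n x' y'"
      by (auto simp: dsum_iff)
    moreover hence "x = x' \<and> y = y'" using assms cat_inj by blast
    ultimately show "z \<in> dsum n (C \<inter> C') (D \<inter> D')" unfolding dsum_iff by auto
  qed
  show "dsum n (C \<inter> C') (D \<inter> D') \<subseteq> dsum n C D \<inter> dsum n C' D'"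
    using dsum_mono[of "C \<inter> C'" C "D \<inter> D'" D n] dsum_mono[of "C \<inter> C'" C' "D \<inter> D'" D' n] by blast
qed

lemma wdist_dsum:
  assumes C: "C \<subseteq> bvecs n" and D: "D \<subseteq> bvecs m"
  shows "card {z \<in> dsum n C D. wt (n + m) z = w} =
    (\<Sum>a\<le>w. card {x \<in> C. wt n x = a} * card {y \<in> D. wt m y = w - a})"
proof -
  have fC: "finite C" using finite_subset[OF C finite_bvecs] .
  have fD: "finite D" using finite_subset[OF D finite_bvecs] .
  let ?P = "{p \<in> C \<times> D. wt n (fst p) + wt m (snd p) = w}"
  have e1: "{z \<in> dsum n C D. wt (n + m) z = w} = (\<lambda>(x, y). cat n x y) ` ?P"
  proof (rule set_eqI, rule iffI)
    fix z assume "z \<in> {z \<in> dsum n C D. wt (n + m) z = w}"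
    then obtain x y where xy: "x \<in> C" "y \<in> D" "z = cat n x y" "wt (n + m) z = w" by (auto simp: dsum_iff)
    hence "(x, y) \<in> ?P" by (simp add: wt_cat)
    moreover have "z = (\<lambda>(x, y). cat n x y) (x, y)" using xy by simp
    ultimately show "z \<in> (\<lambda>(x, y). cat n x y) ` ?P" by (rule rev_image_eqI)
  next
    fix z assume "z \<in> (\<lambda>(x, y). cat n x y) ` ?P"
    then obtain x y where "(x, y) \<in> ?P" "z = cat n x y" by auto
    thus "z \<in> {z \<in> dsum n C D. wt (n + m) z = w}" by (auto simp: dsum_iff wt_cat)
  qed
  have e2: "?P = (\<Union>a\<in>{..w}. {x \<in> C. wt n x = a} \<times> {y \<in> D. wt m y = w - a})"
    by auto
  have "card {z \<in> dsum n C D. wt (n + m) z = w} = card ?P"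
    unfolding e1 by (rule card_image) (rule inj_on_subset[OF inj_cat[OF C]], auto)
  also have "\<dots> = (\<Sum>a\<le>w. card ({x \<in> C. wt n x = a} \<times> {y \<in> D. wt m y = w - a}))"
    unfolding e2
  proof (rule card_UN_disjoint)
    show "finite {..w}" by simp
    show "\<forall>a\<in>{..w}. finite ({x \<in> C. wt n x = a} \<times> {y \<in> D. wt m y = w - a})"
      using fC fD by simp
    show "\<forall>a\<in>{..w}. \<forall>b\<in>{..w}. a \<noteq> b \<longrightarrow>
      ({x \<in> C. wt n x = a} \<times> {y \<in> D. wt m y = w - a}) \<inter> ({x \<in> C. wt n x = b} \<times> {y \<in> D. wt m y = w - b}) = {}"
      by blast
  qed
  also have "\<dots> = (\<Sum>a\<le>w. card {x \<in> C. wt n x = a} * card {y \<in> D. wt m y = w - a})"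
    by (simp add: card_cartesian_product)
  finally show ?thesis .
qed

definition good :: "nat \<Rightarrow> nat \<Rightarrow> nat \<Rightarrow> (nat \<Rightarrow> bool) set \<Rightarrow> bool" where
  "good n k d C \<longleftrightarrow> is_code_nkd n k d C \<and> euclidean_LCD n C \<and> euclidean_fsd n C"

lemma min_dist_props:
  assumes "C \<subseteq> bvecs n" "C - {bzero} \<noteq> {}" "min_dist n C = d"
  shows "\<forall>x\<in>C - {bzero}. d \<le> wt n x" "\<exists>x\<in>C - {bzero}. wt n x = d"
proof -
  have f: "finite (wt n ` (C - {bzero}))" using finite_subset[OF assms(1) finite_bvecs] by simp
  show "\<forall>x\<in>C - {bzero}. d \<le> wt n x"
  proof
    fix x assume "x \<in> C - {bzero}"
    hence "wt n x \<in> wt n ` (C - {bzero})" by (rule imageI)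
    hence "Min (wt n ` (C - {bzero})) \<le> wt n x" by (rule Min_le[OF f])
    thus "d \<le> wt n x" using assms(3) unfolding min_dist_def by simp
  qed
  have "Min (wt n ` (C - {bzero})) \<in> wt n ` (C - {bzero})" using f assms(2) by (intro Min_in) auto
  thus "\<exists>x\<in>C - {bzero}. wt n x = d" using assms(3) unfolding min_dist_def by auto
qed

lemma min_distI:
  assumes "C \<subseteq> bvecs n" "\<forall>x\<in>C - {bzero}. d \<le> wt n x" "x0 \<in> C - {bzero}" "wt n x0 = d"
  shows "min_dist n C = d"
proof -
  have f: "finite (wt n ` (C - {bzero}))" using finite_subset[OF assms(1) finite_bvecs] by simp
  show ?thesis unfolding min_dist_def
    by (rule Min_eqI[OF f]) (use assms in auto)
qed

lemma dsum_good:
  assumes gC: "good n k d C" and gD: "good m l d D"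
  shows "good (n + m) (k + l) d (dsum n C D)"
proof -
  from gC have lC: "binary_linear_code n C" and cC: "card C = 2 ^ k" and nC: "C - {bzero} \<noteq> {}"
    and mC: "min_dist n C = d" and LC: "C \<inter> edual n C = {bzero}" and fC: "euclidean_fsd n C"
    by (auto simp: good_def is_code_nkd_def euclidean_LCD_def)
  from gD have lD: "binary_linear_code m D" and cD: "card D = 2 ^ l" and nD: "D - {bzero} \<noteq> {}"
    and mD: "min_dist m D = d" and LD: "D \<inter> edual m D = {bzero}" and fD: "euclidean_fsd m D"
    by (auto simp: good_def is_code_nkd_def euclidean_LCD_def)
  have Cb: "C \<subseteq> bvecs n" "bzero \<in> C" "\<forall>x\<in>C. \<forall>y\<in>C. badd x y \<in> C" using lC by (auto simp: binary_linear_code_def)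
  have Db: "D \<subseteq> bvecs m" "bzero \<in> D" "\<forall>x\<in>D. \<forall>y\<in>D. badd x y \<in> D" using lD by (auto simp: binary_linear_code_def)
  let ?S = "dsum n C D"
  have Sb: "?S \<subseteq> bvecs (n + m)"
  proof
    fix z assume "z \<in> ?S"
    then obtain x y where "y \<in> D" "z = cat n x y" by (auto simp: dsum_iff)
    thus "z \<in> bvecs (n + m)" using Db(1) cat_bvecs by blast
  qed
  have lin: "binary_linear_code (n + m) ?S"
    unfolding binary_linear_code_def
  proof (intro conjI ballI)
    show "?S \<subseteq> bvecs (n + m)" by (rule Sb)
    show "bzero \<in> ?S" unfolding dsum_iff using Cb(2) Db(2) bzero_cat[of n, symmetric] by blast
    fix z z' assume "z \<in> ?S" "z' \<in> ?S"
    then obtain x y x' y' where "x \<in> C" "y \<in> D" "x' \<in> C" "y' \<in> D" "z = cat n x y" "z' = cat n x' y'"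
      by (auto simp: dsum_iff)
    moreover hence "badd z z' = cat n (badd x x') (badd y y')" by (simp add: badd_cat)
    ultimately show "badd z z' \<in> ?S" unfolding dsum_iff using Cb(3) Db(3) by blast
  qed
  have card: "card ?S = 2 ^ (k + l)" using card_dsum[OF Cb(1)] cC cD by (simp add: power_add)
  obtain x0 where x0: "x0 \<in> C - {bzero}" "wt n x0 = d" using min_dist_props[OF Cb(1) nC mC] by blast
  have x0S: "cat n x0 bzero \<in> ?S - {bzero}"
  proof -
    have "cat n x0 bzero \<noteq> bzero"
    proof
      assume "cat n x0 bzero = bzero"
      hence "cat n x0 bzero = cat n bzero bzero" by (simp add: bzero_cat)
      moreover have "x0 \<in> bvecs n" using x0 Cb(1) by blast
      ultimately have "x0 = bzero" using cat_inj bzero_bvecs by blast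
      thus False using x0 by simp
    qed
    moreover have "cat n x0 bzero \<in> ?S" unfolding dsum_iff using x0 Db(2) by blast
    ultimately show ?thesis by blast
  qed
  have mind: "min_dist (n + m) ?S = d"
  proof (rule min_distI[OF Sb _ x0S])
    show "wt (n + m) (cat n x0 bzero) = d" using x0 by (simp add: wt_cat)
    show "\<forall>z\<in>?S - {bzero}. d \<le> wt (n + m) z"
    proof
      fix z assume z: "z \<in> ?S - {bzero}"
      then obtain x y where xy: "x \<in> C" "y \<in> D" "z = cat n x y" by (auto simp: dsum_iff)
      have "x \<noteq> bzero \<or> y \<noteq> bzero" using z xy bzero_cat by auto
      thus "d \<le> wt (n + m) z"
      proof
        assume "x \<noteq> bzero"
        hence "d \<le> wt n x" using min_dist_props(1)[OF Cb(1) nC mC] xy by auto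
        thus ?thesis using xy by (simp add: wt_cat)
      next
        assume "y \<noteq> bzero"
        hence "d \<le> wt m y" using min_dist_props(1)[OF Db(1) nD mD] xy by auto
        thus ?thesis using xy by (simp add: wt_cat)
      qed
    qed
  qed
  have dual: "edual (n + m) ?S = dsum n (edual n C) (edual m D)"
    by (rule dsum_edual) (use Cb Db in auto)
  have eC: "edual n C \<subseteq> bvecs n" "edual m D \<subseteq> bvecs m" by (auto simp: edual_def)
  have lcd: "?S \<inter> edual (n + m) ?S = {bzero}"
    unfolding dual dsum_Int[OF Cb(1) eC(1)] LC LD by (simp add: dsum_def bzero_cat)
  have fsd: "euclidean_fsd (n + m) ?S"
    unfolding euclidean_fsd_def
  proof
    fix w
    show "card {x \<in> ?S. wt (n + m) x = w} = card {x \<in> edual (n + m) ?S. wt (n + m) x = w}"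
      unfolding dual wdist_dsum[OF Cb(1) Db(1)] wdist_dsum[OF eC]
      using fC fD by (simp add: euclidean_fsd_def)
  qed
  have ne: "?S - {bzero} \<noteq> {}" using x0S by blast
  show ?thesis unfolding good_def is_code_nkd_def euclidean_LCD_def
    using lin card ne mind lcd fsd by simp
qed

lemma good_exists: "fsd_LCD_code_exists n k d \<longleftrightarrow> (\<exists>C. good n k d C)"
  by (simp add: fsd_LCD_code_exists_def good_def)

lemma good_mult:
  assumes "fsd_LCD_code_exists n k d" "1 \<le> s"
  shows "fsd_LCD_code_exists (s * n) (s * k) d"
  using assms(2)
proof (induction s)
  case 0 thus ?case by simp
next
  case (Suc s)
  show ?case
  proof (cases "s = 0")
    case True thus ?thesis using assms(1) by simp
  next
    case False
    hence "fsd_LCD_code_exists (s * n) (s * k) d" using Suc by simp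
    then obtain C D where "good n k d C" "good (s * n) (s * k) d D" using assms(1) by (auto simp: good_exists)
    hence "good (n + s * n) (k + s * k) d (dsum n C D)" by (rule dsum_good)
    thus ?thesis by (auto simp: good_exists)
  qed
qed



section \<open>Parity and counting\<close>

lemma card_lessSuc:
  "card {i::nat. i < Suc m \<and> P i} = card {i. i < m \<and> P i} + (if P m then 1 else 0)"
proof -
  have e: "{i::nat. i < Suc m \<and> P i} = {i. i < m \<and> P i} \<union> (if P m then {m} else {})"
    by (cases "P m") (auto simp: less_Suc_eq)
  show ?thesis unfolding e by (cases "P m") simp_all
qed

lemma card_as_sum: "card {i::nat. i < m \<and> P i} = (\<Sum>i<m. if P i then 1 else 0)"
  by (induction m) (simp_all add: card_lessSuc)

lemma odd_sum: "odd (\<Sum>i<(m::nat). f i :: nat) = odd (card {i. i < m \<and> odd (f i)})"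
  by (induction m) (auto simp: card_lessSuc)

lemma odd_card_xor:
  "odd (card {i::nat. i < m \<and> (P i \<noteq> Q i)}) = (odd (card {i. i < m \<and> P i}) \<noteq> odd (card {i. i < m \<and> Q i}))"
  by (induction m) (auto simp: card_lessSuc)

lemma fubini_parity:
  "odd (card {i::nat. i < m \<and> odd (card {j::nat. j < m \<and> R i j})}) =
   odd (card {j. j < m \<and> odd (card {i. i < m \<and> R i j})})"
proof -
  have "odd (card {i::nat. i < m \<and> odd (card {j::nat. j < m \<and> R i j})}) =
        odd (\<Sum>i<m. card {j::nat. j < m \<and> R i j})" by (simp add: odd_sum)
  also have "\<dots> = odd (\<Sum>i<m. \<Sum>j<m. if R i j then 1 else (0::nat))" by (simp add: card_as_sum)
  also have "\<dots> = odd (\<Sum>j<m. \<Sum>i<m. if R i j then 1 else (0::nat))" by (subst sum.swap) simp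
  also have "\<dots> = odd (\<Sum>j<m. card {i::nat. i < m \<and> R i j})" by (simp add: card_as_sum)
  also have "\<dots> = odd (card {j. j < m \<and> odd (card {i. i < m \<and> R i j})})" by (simp add: odd_sum)
  finally show ?thesis .
qed

lemma conj_odd_card: "(P \<and> odd (card {i::nat. i < m \<and> Q i})) = odd (card {i. i < m \<and> P \<and> Q i})"
  by (cases P) auto

lemma card_unit: "j < m \<Longrightarrow> card {i::nat. i < m \<and> i = j \<and> Q i} = (if Q j then 1 else 0)"
proof -
  assume j: "j < m"
  have "{i::nat. i < m \<and> i = j \<and> Q i} = (if Q j then {j} else {})" using j by auto
  thus ?thesis by simp
qed

section \<open>Matrices over GF(2) as functions\<close>

definition mv :: "nat \<Rightarrow> (nat \<Rightarrow> nat \<Rightarrow> bool) \<Rightarrow> (nat \<Rightarrow> bool) \<Rightarrow> nat \<Rightarrow> bool" where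
  "mv m A x = (\<lambda>j. j < m \<and> odd (card {i. i < m \<and> x i \<and> A i j}))"

definition mm :: "nat \<Rightarrow> (nat \<Rightarrow> nat \<Rightarrow> bool) \<Rightarrow> (nat \<Rightarrow> nat \<Rightarrow> bool) \<Rightarrow> nat \<Rightarrow> nat \<Rightarrow> bool" where
  "mm m A B = (\<lambda>i k. odd (card {j. j < m \<and> A i j \<and> B j k}))"

lemma mv_bvecs: "mv m A x \<in> bvecs m"
  by (simp add: mv_def bvecs_def)

lemma mv_zero: "mv m A bzero = bzero"
  by (simp add: mv_def bzero_def)

lemma mv_badd: "mv m A (badd x y) = badd (mv m A x) (mv m A y)"
proof
  fix j
  have e: "{i. i < m \<and> badd x y i \<and> A i j} = {i. i < m \<and> ((x i \<and> A i j) \<noteq> (y i \<and> A i j))}"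
    by (auto simp: badd_def)
  have "mv m A (badd x y) j = (j < m \<and> (odd (card {i. i < m \<and> x i \<and> A i j}) \<noteq> odd (card {i. i < m \<and> y i \<and> A i j})))"
    unfolding mv_def e odd_card_xor ..
  also have "\<dots> = badd (mv m A x) (mv m A y) j" unfolding badd_def mv_def by blast
  finally show "mv m A (badd x y) j = badd (mv m A x) (mv m A y) j" .
qed

lemma mv_assoc: "mv m B (mv m A x) = mv m (mm m A B) x"
proof
  fix k
  have h1: "\<And>j. (odd (card {i. i < m \<and> x i \<and> A i j}) \<and> B j k) = odd (card {i. i < m \<and> (x i \<and> A i j \<and> B j k)})"
    by (case_tac "B j k") auto
  have h2: "\<And>i. (x i \<and> odd (card {j. j < m \<and> A i j \<and> B j k})) = odd (card {j. j < m \<and> (x i \<and> A i j \<and> B j k)})"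
    by (case_tac "x i") auto
  have e1: "{j. j < m \<and> mv m A x j \<and> B j k} = {j. j < m \<and> odd (card {i. i < m \<and> (x i \<and> A i j \<and> B j k)})}"
    using h1 by (auto simp: mv_def)
  have e2: "{i. i < m \<and> x i \<and> mm m A B i k} = {i. i < m \<and> odd (card {j. j < m \<and> (x i \<and> A i j \<and> B j k)})}"
    using h2 by (auto simp: mm_def)
  show "mv m B (mv m A x) k = mv m (mm m A B) x k"
    unfolding mv_def[of m B] mv_def[of m "mm m A B"] e1 e2 using fubini_parity[of m "\<lambda>i j. x i \<and> A i j \<and> B j k"] by simp
qed

lemma mv_cong:
  assumes "\<And>i j. i < m \<Longrightarrow> j < m \<Longrightarrow> A i j = A' i j"
  shows "mv m A x = mv m A' x"
proof
  fix j show "mv m A x j = mv m A' x j"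
  proof (cases "j < m")
    case True
    hence "{i. i < m \<and> x i \<and> A i j} = {i. i < m \<and> x i \<and> A' i j}" using assms by auto
    thus ?thesis by (simp add: mv_def)
  qed (simp add: mv_def)
qed

lemma mv_id: "x \<in> bvecs m \<Longrightarrow> mv m (\<lambda>i j. i = j) x = x"
proof
  fix j assume x: "x \<in> bvecs m"
  show "mv m (\<lambda>i j. i = j) x j = x j"
  proof (cases "j < m")
    case True
    have "{i. i < m \<and> x i \<and> i = j} = {i. i < m \<and> i = j \<and> x i}" by auto
    thus ?thesis using True card_unit[OF True, of x] by (simp add: mv_def)
  next
    case False thus ?thesis using x by (simp add: mv_def bvecs_def)
  qed
qed

lemma mv_add_mat: "mv m (\<lambda>i j. A i j \<noteq> B i j) x = badd (mv m A x) (mv m B x)"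
proof
  fix j
  have e: "{i. i < m \<and> x i \<and> (A i j \<noteq> B i j)} = {i. i < m \<and> ((x i \<and> A i j) \<noteq> (x i \<and> B i j))}"
    by auto
  have "mv m (\<lambda>i j. A i j \<noteq> B i j) x j = (j < m \<and> (odd (card {i. i < m \<and> x i \<and> A i j}) \<noteq> odd (card {i. i < m \<and> x i \<and> B i j})))"
    unfolding mv_def e odd_card_xor ..
  also have "\<dots> = badd (mv m A x) (mv m B x) j" unfolding badd_def mv_def by blast
  finally show "mv m (\<lambda>i j. A i j \<noteq> B i j) x j = badd (mv m A x) (mv m B x) j" .
qed

lemma eorth_mv_sym:
  assumes sym: "\<And>i j. i < m \<Longrightarrow> j < m \<Longrightarrow> A i j = A j i"
  shows "eorth m x (mv m A y) = eorth m (mv m A x) y"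
proof -
  have h1: "\<And>i. i < m \<Longrightarrow> (x i \<and> odd (card {j. j < m \<and> y j \<and> A j i})) = odd (card {j. j < m \<and> (x i \<and> y j \<and> A i j)})"
  proof -
    fix i assume i: "i < m"
    have "{j. j < m \<and> y j \<and> A j i} = {j. j < m \<and> y j \<and> A i j}" using sym i by auto
    thus "(x i \<and> odd (card {j. j < m \<and> y j \<and> A j i})) = odd (card {j. j < m \<and> (x i \<and> y j \<and> A i j)})"
      by (cases "x i") auto
  qed
  have h2: "\<And>j. (odd (card {i. i < m \<and> x i \<and> A i j}) \<and> y j) = odd (card {i. i < m \<and> (x i \<and> y j \<and> A i j)})"
    by (case_tac "y j") auto
  have e1: "{i. i < m \<and> x i \<and> mv m A y i} = {i. i < m \<and> odd (card {j. j < m \<and> (x i \<and> y j \<and> A i j)})}"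
    using h1 by (auto simp: mv_def)
  have e2: "{j. j < m \<and> mv m A x j \<and> y j} = {j. j < m \<and> odd (card {i. i < m \<and> (x i \<and> y j \<and> A i j)})}"
    using h2 by (auto simp: mv_def)
  show ?thesis
    unfolding eorth_def e1 e2 using fubini_parity[of m "\<lambda>i j. x i \<and> y j \<and> A i j"] by simp
qed

lemma eorth_unit: "i < m \<Longrightarrow> eorth m (\<lambda>k. k = i) w \<longleftrightarrow> \<not> w i"
proof -
  assume i: "i < m"
  have "{k. k < m \<and> k = i \<and> w k} = (if w i then {i} else {})" using i by auto
  thus ?thesis by (simp add: eorth_def)
qed



lemma badd_bvecs: "x \<in> bvecs m \<Longrightarrow> y \<in> bvecs m \<Longrightarrow> badd x y \<in> bvecs m"
  by (simp add: bvecs_def badd_def)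

lemma enc_zero: "cat m bzero (mv m A bzero) = bzero"
  by (simp add: mv_zero bzero_cat)

lemma block_sem:
  assumes sym: "\<And>i j. i < m \<Longrightarrow> j < m \<Longrightarrow> A i j = A j i"
  and AB: "\<And>x. x \<in> bvecs m \<Longrightarrow> mv m B (mv m A x) = x"
  and LCD: "\<And>x. x \<in> bvecs m \<Longrightarrow> mv m A (mv m A x) = x \<Longrightarrow> x = bzero"
  and LBA: "\<And>x. x \<in> bvecs m \<Longrightarrow> x \<noteq> bzero \<Longrightarrow> wt m x \<le> t \<Longrightarrow> d \<le> wt m x + wt m (mv m A x)"
  and LBB: "\<And>x. x \<in> bvecs m \<Longrightarrow> x \<noteq> bzero \<Longrightarrow> wt m x \<le> t \<Longrightarrow> d \<le> wt m x + wt m (mv m B x)"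
  and dt: "d \<le> 2 * t + 2"
  and w0: "x0 \<in> bvecs m" "x0 \<noteq> bzero" "wt m x0 + wt m (mv m A x0) = d"
  shows "good (m + m) m d ((\<lambda>x. cat m x (mv m A x)) ` bvecs m)"
proof -
  define enc where "enc = (\<lambda>x. cat m x (mv m A x))"
  define denc where "denc = (\<lambda>y. cat m (mv m A y) y)"
  let ?C = "enc ` bvecs m"
  let ?D = "denc ` bvecs m"
  have inj_enc: "inj_on enc (bvecs m)"
  proof (rule inj_onI)
    fix x y assume "x \<in> bvecs m" "y \<in> bvecs m" "enc x = enc y"
    thus "x = y" unfolding enc_def using cat_inj by blast
  qed
  have inj_denc: "inj_on denc (bvecs m)"
  proof (rule inj_onI)
    fix x y assume "denc x = denc y"
    hence "hi m (denc x) = hi m (denc y)" by simp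
    thus "x = y" unfolding denc_def hi_cat .
  qed
  have enc_b: "\<And>x. enc x \<in> bvecs (m + m)" unfolding enc_def by (rule cat_bvecs[OF mv_bvecs])
  have denc_b: "\<And>y. y \<in> bvecs m \<Longrightarrow> denc y \<in> bvecs (m + m)" unfolding denc_def by (rule cat_bvecs)
  have enc0: "enc bzero = bzero" unfolding enc_def by (rule enc_zero)
  have denc0: "denc bzero = bzero" unfolding denc_def by (simp add: mv_zero bzero_cat)
  have wt_enc: "\<And>x. wt (m + m) (enc x) = wt m x + wt m (mv m A x)" unfolding enc_def by (rule wt_cat)
  have wt_denc: "\<And>x. wt (m + m) (denc x) = wt m x + wt m (mv m A x)" unfolding denc_def by (simp add: wt_cat)
  have Cb: "?C \<subseteq> bvecs (m + m)" using enc_b by blast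
  have lin: "binary_linear_code (m + m) ?C"
    unfolding binary_linear_code_def
  proof (intro conjI ballI)
    show "?C \<subseteq> bvecs (m + m)" by (rule Cb)
    show "bzero \<in> ?C" using enc0 bzero_bvecs by (metis imageI)
    fix z z' assume "z \<in> ?C" "z' \<in> ?C"
    then obtain x x' where x: "x \<in> bvecs m" "x' \<in> bvecs m" "z = enc x" "z' = enc x'" by blast
    hence "badd z z' = enc (badd x x')" unfolding enc_def by (simp add: badd_cat mv_badd)
    thus "badd z z' \<in> ?C" using badd_bvecs[OF x(1,2)] by blast
  qed
  have card: "card ?C = 2 ^ m" using card_image[OF inj_enc] card_bvecs by simp
  have unit_b: "\<And>i. (\<lambda>k. k = i) \<in> bvecs m \<longleftrightarrow> i < m" by (auto simp: bvecs_def, metis le_refl not_le)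
  have dual: "edual (m + m) ?C = ?D"
  proof
    show "?D \<subseteq> edual (m + m) ?C"
    proof
      fix z assume "z \<in> ?D"
      then obtain y where y: "y \<in> bvecs m" "z = denc y" by blast
      have "\<forall>w\<in>?C. eorth (m + m) w z"
      proof
        fix w assume "w \<in> ?C"
        then obtain x where wx: "w = enc x" by blast
        show "eorth (m + m) w z"
          by (simp add: wx y(2) enc_def denc_def eorth_cat eorth_mv_sym[of m A, OF sym])
      qed
      thus "z \<in> edual (m + m) ?C" using denc_b[OF y(1)] y(2) by (simp add: edual_def)
    qed
    show "edual (m + m) ?C \<subseteq> ?D"
    proof
      fix z assume z: "z \<in> edual (m + m) ?C"
      hence zb: "z \<in> bvecs (m + m)" and zo: "\<forall>w\<in>?C. eorth (m + m) w z" by (auto simp: edual_def)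
      define u where "u = lo m z"
      define v where "v = hi m z"
      have vb: "v \<in> bvecs m" unfolding v_def by (rule hi_bvecs[OF zb])
      have zuv: "z = cat m u v" unfolding u_def v_def by (simp add: cat_lo_hi)
      have "u = mv m A v"
      proof
        fix i
        show "u i = mv m A v i"
        proof (cases "i < m")
          case True
          let ?e = "\<lambda>k. k = i"
          have "enc ?e \<in> ?C" using True unit_b by blast
          hence "eorth (m + m) (enc ?e) z" using zo by blast
          hence "eorth m ?e u \<longleftrightarrow> eorth m (mv m A ?e) v" unfolding enc_def zuv eorth_cat .
          also have "eorth m (mv m A ?e) v \<longleftrightarrow> eorth m ?e (mv m A v)" using eorth_mv_sym[of m A, OF sym] by metis
          finally show ?thesis unfolding eorth_unit[OF True] by blast
        next
          case False thus ?thesis by (simp add: u_def lo_def mv_def)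
        qed
      qed
      hence "z = denc v" unfolding denc_def zuv by simp
      thus "z \<in> ?D" using vb by blast
    qed
  qed
  have lcd: "?C \<inter> edual (m + m) ?C = {bzero}"
  proof
    show "?C \<inter> edual (m + m) ?C \<subseteq> {bzero}"
    proof
      fix z assume "z \<in> ?C \<inter> edual (m + m) ?C"
      then obtain x y where x: "x \<in> bvecs m" and y: "y \<in> bvecs m" and zx: "z = enc x" and zy: "z = denc y"
        unfolding dual by blast
      have "cat m x (mv m A x) = cat m (mv m A y) y" using zx zy unfolding enc_def denc_def by simp
      hence "x = mv m A y \<and> mv m A x = y" using cat_inj[OF x mv_bvecs] by blast
      hence "mv m A (mv m A x) = x" by metis
      hence "x = bzero" using LCD x by blast
      thus "z \<in> {bzero}" using zx enc0 by simp
    qed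
    show "{bzero} \<subseteq> ?C \<inter> edual (m + m) ?C"
      unfolding dual using enc0 denc0 bzero_bvecs by (metis Int_iff empty_subsetI imageI insert_subset)
  qed
  have fsd: "euclidean_fsd (m + m) ?C"
    unfolding euclidean_fsd_def
  proof
    fix w
    let ?X = "{x \<in> bvecs m. wt m x + wt m (mv m A x) = w}"
    have e1: "{z \<in> ?C. wt (m + m) z = w} = enc ` ?X" using wt_enc by auto
    have e2: "{z \<in> ?D. wt (m + m) z = w} = denc ` ?X" using wt_denc by auto
    have "card {z \<in> ?C. wt (m + m) z = w} = card ?X"
      unfolding e1 by (rule card_image) (rule inj_on_subset[OF inj_enc], blast)
    also have "\<dots> = card {z \<in> ?D. wt (m + m) z = w}"
      unfolding e2 by (rule card_image[symmetric]) (rule inj_on_subset[OF inj_denc], blast)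
    finally show "card {z \<in> ?C. wt (m + m) z = w} = card {z \<in> edual (m + m) ?C. wt (m + m) z = w}"
      unfolding dual .
  qed
  have lb: "\<forall>z\<in>?C - {bzero}. d \<le> wt (m + m) z"
  proof
    fix z assume z: "z \<in> ?C - {bzero}"
    then obtain x where x: "x \<in> bvecs m" "z = enc x" by blast
    have xn: "x \<noteq> bzero" using z x enc0 by blast
    show "d \<le> wt (m + m) z"
    proof (rule ccontr)
      assume "\<not> d \<le> wt (m + m) z"
      hence lt: "wt m x + wt m (mv m A x) < d" using x wt_enc by simp
      hence "wt m x \<le> t \<or> wt m (mv m A x) \<le> t" using dt by linarith
      thus False
      proof
        assume "wt m x \<le> t"
        thus False using LBA[OF x(1) xn] lt by linarith
      next
        assume a: "wt m (mv m A x) \<le> t"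
        have yn: "mv m A x \<noteq> bzero"
        proof
          assume "mv m A x = bzero"
          hence "mv m B (mv m A x) = bzero" by (simp add: mv_zero)
          thus False using AB[OF x(1)] xn by simp
        qed
        have "d \<le> wt m (mv m A x) + wt m (mv m B (mv m A x))" using LBB[OF mv_bvecs yn a] .
        thus False using AB[OF x(1)] lt by simp
      qed
    qed
  qed
  have w0C: "enc x0 \<in> ?C - {bzero}"
  proof -
    have "enc x0 \<noteq> bzero"
    proof
      assume "enc x0 = bzero"
      hence "lo m (enc x0) = lo m bzero" by simp
      hence "x0 = bzero" unfolding enc_def using lo_cat[OF w0(1)] lo_cat[OF bzero_bvecs] bzero_cat
        by (metis enc_zero)
      thus False using w0(2) by simp
    qed
    thus ?thesis using w0(1) by blast
  qed
  have mind: "min_dist (m + m) ?C = d"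
    by (rule min_distI[OF Cb lb w0C]) (simp add: wt_enc w0(3))
  have ne: "?C - {bzero} \<noteq> {}" using w0C by blast
  show ?thesis unfolding enc_def[symmetric] good_def is_code_nkd_def euclidean_LCD_def
    using lin card ne mind lcd fsd by simp
qed



fun xorl :: "bool list \<Rightarrow> bool list \<Rightarrow> bool list" where
  "xorl (True # as) (b # bs) = (\<not> b) # xorl as bs"
| "xorl (False # as) (b # bs) = b # xorl as bs"
| "xorl _ _ = []"

fun sel :: "bool list \<Rightarrow> bool list list \<Rightarrow> bool list \<Rightarrow> bool list" where
  "sel (True # v) (r # R) acc = sel v R (xorl acc r)"
| "sel (False # v) (r # R) acc = sel v R acc"
| "sel _ _ acc = acc"

fun cntl :: "bool list \<Rightarrow> nat" where
  "cntl [] = 0"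
| "cntl (True # a) = Suc (cntl a)"
| "cntl (False # a) = cntl a"

fun geq :: "bool list \<Rightarrow> nat \<Rightarrow> bool" where
  "geq _ 0 = True"
| "geq [] (Suc n) = False"
| "geq (True # a) (Suc n) = geq a n"
| "geq (False # a) (Suc n) = geq a (Suc n)"

fun chk :: "nat \<Rightarrow> nat \<Rightarrow> bool list \<Rightarrow> bool list list \<Rightarrow> bool"
and chk2 :: "nat \<Rightarrow> nat \<Rightarrow> bool list \<Rightarrow> bool list list \<Rightarrow> bool" where
  "chk e t acc [] = True"
| "chk e 0 acc (r # R) = True"
| "chk 0 (Suc t) acc (r # R) = True"
| "chk (Suc e) (Suc t) acc (r # R) = (chk2 e t (xorl acc r) R \<and> chk (Suc e) (Suc t) acc R)"
| "chk2 e t a R = (geq a e \<and> chk e t a R)"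

definition wfm :: "nat \<Rightarrow> bool list list \<Rightarrow> bool" where
  "wfm m L \<longleftrightarrow> length L = m \<and> (\<forall>r\<in>set L. length r = m)"

definition mat :: "bool list list \<Rightarrow> nat \<Rightarrow> nat \<Rightarrow> bool" where
  "mat L i j = L ! i ! j"

definition lst :: "nat \<Rightarrow> (nat \<Rightarrow> bool) \<Rightarrow> bool list" where
  "lst m x = map x [0..<m]"

definition mulL :: "nat \<Rightarrow> bool list list \<Rightarrow> bool list list \<Rightarrow> bool list list" where
  "mulL m X Y = map (\<lambda>r. sel r Y (replicate m False)) X"

definition idl :: "nat \<Rightarrow> bool list list" where
  "idl m = map (\<lambda>i. map (\<lambda>j. i = j) [0..<m]) [0..<m]"

definition xorM :: "bool list list \<Rightarrow> bool list list \<Rightarrow> bool list list" where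
  "xorM X Y = map (\<lambda>(a, b). xorl a b) (zip X Y)"

lemma xorl_len: "length (xorl a b) = min (length a) (length b)"
  by (induction a b rule: xorl.induct) auto

lemma xorl_nth: "j < length a \<Longrightarrow> j < length b \<Longrightarrow> xorl a b ! j = (a ! j \<noteq> b ! j)"
  by (induction a b arbitrary: j rule: xorl.induct) (auto simp: nth_Cons split: nat.split)

lemma card_Suc_shift:
  "card {i::nat. i < Suc n \<and> P i} = (if P 0 then 1 else 0) + card {i. i < n \<and> P (Suc i)}"
proof -
  have "card {i::nat. i < 1 + n \<and> P i} = card {i. i < 1 \<and> P i} + card {j. j < n \<and> P (1 + j)}"
    by (rule card_split)
  moreover have "{i::nat. i < 1 \<and> P i} = (if P 0 then {0} else {})" by auto
  ultimately show ?thesis by simp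
qed

lemma sel_sem:
  "length acc = m \<Longrightarrow> (\<forall>r\<in>set R. length r = m) \<Longrightarrow> length v = length R \<Longrightarrow>
   length (sel v R acc) = m \<and>
   (\<forall>j<m. sel v R acc ! j = (acc ! j \<noteq> odd (card {i. i < length R \<and> v ! i \<and> R ! i ! j})))"
proof (induction R arbitrary: v acc)
  case Nil
  thus ?case by simp
next
  case (Cons r R)
  then obtain b v' where v: "v = b # v'" and lv: "length v' = length R" by (cases v) auto
  have lr: "length r = m" and lR: "\<forall>r\<in>set R. length r = m" using Cons.prems by auto
  show ?case
  proof (cases b)
    case True
    have la: "length (xorl acc r) = m" using Cons.prems(1) lr by (simp add: xorl_len)
    note IH = Cons.IH[OF la lR lv]
    show ?thesis
    proof (intro conjI allI impI)
      show "length (sel v (r # R) acc) = m" using IH v True by simp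
      fix j assume j: "j < m"
      show "sel v (r # R) acc ! j = (acc ! j \<noteq> odd (card {i. i < length (r # R) \<and> v ! i \<and> (r # R) ! i ! j}))"
        using IH j v True Cons.prems(1) lr by (simp add: card_Suc_shift xorl_nth) blast
    qed
  next
    case False
    note IH = Cons.IH[OF Cons.prems(1) lR lv]
    show ?thesis
    proof (intro conjI allI impI)
      show "length (sel v (r # R) acc) = m" using IH v False by simp
      fix j assume j: "j < m"
      show "sel v (r # R) acc ! j = (acc ! j \<noteq> odd (card {i. i < length (r # R) \<and> v ! i \<and> (r # R) ! i ! j}))"
        using IH j v False by (simp add: card_Suc_shift)
    qed
  qed
qed

lemma cntl_card: "cntl l = card {i. i < length l \<and> l ! i}"
proof (induction l)
  case Nil thus ?case by simp
next
  case (Cons a l) thus ?case by (cases a) (simp_all add: card_Suc_shift)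
qed

lemma geq_iff: "geq a e \<longleftrightarrow> e \<le> cntl a"
  by (induction a e rule: geq.induct) auto

lemma sel_zero: "cntl v = 0 \<Longrightarrow> sel v R acc = acc"
  by (induction v R acc rule: sel.induct) auto

lemma chk_sound:
  "chk e t acc R \<Longrightarrow> length v = length R \<Longrightarrow> 0 < cntl v \<Longrightarrow> cntl v \<le> t \<Longrightarrow>
   e \<le> cntl v + cntl (sel v R acc)"
proof (induction R arbitrary: e t acc v)
  case Nil thus ?case by simp
next
  case (Cons r R)
  then obtain b v' where v: "v = b # v'" and lv: "length v' = length R" by (cases v) auto
  show ?case
  proof (cases t)
    case 0 thus ?thesis using Cons.prems by simp
  next
    case (Suc t')
    show ?thesis
    proof (cases e)
      case 0 thus ?thesis by simp
    next
      case (Suc e')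
      have c: "chk2 e' t' (xorl acc r) R" "chk (Suc e') (Suc t') acc R"
        using Cons.prems(1) \<open>t = Suc t'\<close> Suc by simp_all
      show ?thesis
      proof (cases b)
        case True
        have g: "geq (xorl acc r) e'" "chk e' t' (xorl acc r) R" using c(1) by simp_all
        show ?thesis
        proof (cases "cntl v' = 0")
          case True
          thus ?thesis using g(1) v \<open>b\<close> Suc by (simp add: sel_zero geq_iff)
        next
          case False
          have "e' \<le> cntl v' + cntl (sel v' R (xorl acc r))"
            using Cons.IH[OF g(2) lv] False Cons.prems(4) v \<open>b\<close> \<open>t = Suc t'\<close> by simp
          thus ?thesis using v \<open>b\<close> Suc by simp
        qed
      next
        case False
        have "Suc e' \<le> cntl v' + cntl (sel v' R acc)"
          using Cons.IH[OF c(2) lv] Cons.prems(3,4) v False \<open>t = Suc t'\<close> by simp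
        thus ?thesis using v False Suc by simp
      qed
    qed
  qed
qed

lemma lst_len[simp]: "length (lst m x) = m"
  by (simp add: lst_def)

lemma lst_nth[simp]: "i < m \<Longrightarrow> lst m x ! i = x i"
  by (simp add: lst_def)

lemma cntl_lst: "cntl (lst m x) = wt m x"
proof -
  have "{i. i < m \<and> lst m x ! i} = {i. i < m \<and> x i}" by auto
  thus ?thesis by (simp add: cntl_card wt_def)
qed

lemma sel_mv:
  assumes "wfm m L"
  shows "sel (lst m x) L (replicate m False) = lst m (mv m (mat L) x)"
proof -
  have L: "length L = m" "\<forall>r\<in>set L. length r = m" using assms by (auto simp: wfm_def)
  note S = sel_sem[of "replicate m False" m L "lst m x", OF _ L(2)]
  show ?thesis
  proof (rule nth_equalityI)
    show "length (sel (lst m x) L (replicate m False)) = length (lst m (mv m (mat L) x))"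
      using S L by simp
    fix j assume "j < length (sel (lst m x) L (replicate m False))"
    hence j: "j < m" using S L by simp
    have "{i. i < length L \<and> lst m x ! i \<and> L ! i ! j} = {i. i < m \<and> x i \<and> mat L i j}"
      using L by (auto simp: mat_def)
    thus "sel (lst m x) L (replicate m False) ! j = lst m (mv m (mat L) x) ! j"
      using S L j by (simp add: mv_def)
  qed
qed

lemma mulL_nth:
  assumes "wfm m X" "wfm m Y" "i < m" "k < m"
  shows "mulL m X Y ! i ! k = mm m (mat X) (mat Y) i k"
proof -
  have X: "length X = m" "length (X ! i) = m" using assms by (auto simp: wfm_def)
  have Y: "length Y = m" "\<forall>r\<in>set Y. length r = m" using assms by (auto simp: wfm_def)
  note S = sel_sem[of "replicate m False" m Y "X ! i", OF _ Y(2)]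
  have "mulL m X Y ! i = sel (X ! i) Y (replicate m False)" using X assms(3) by (simp add: mulL_def)
  moreover have "{j. j < length Y \<and> X ! i ! j \<and> Y ! j ! k} = {j. j < m \<and> mat X i j \<and> mat Y j k}"
    using Y by (auto simp: mat_def)
  ultimately show ?thesis using S X Y assms(4) by (simp add: mm_def)
qed

lemma mulL_wfm: "wfm m X \<Longrightarrow> wfm m Y \<Longrightarrow> wfm m (mulL m X Y)"
proof -
  assume X: "wfm m X" and Y: "wfm m Y"
  have "\<And>r. r \<in> set X \<Longrightarrow> length (sel r Y (replicate m False)) = m"
    using sel_sem[of "replicate m False" m Y] X Y by (auto simp: wfm_def)
  thus ?thesis using X by (auto simp: wfm_def mulL_def)
qed

lemma idl_nth: "i < m \<Longrightarrow> k < m \<Longrightarrow> idl m ! i ! k = (i = k)"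
  by (simp add: idl_def)

lemma idl_wfm: "wfm m (idl m)"
  by (auto simp: wfm_def idl_def)

lemma xorM_nth:
  assumes "wfm m X" "wfm m Y" "i < m" "j < m"
  shows "xorM X Y ! i ! j = (X ! i ! j \<noteq> Y ! i ! j)"
  using assms by (auto simp: wfm_def xorM_def xorl_nth)

lemma xorM_wfm: "wfm m X \<Longrightarrow> wfm m Y \<Longrightarrow> wfm m (xorM X Y)"
  by (auto simp: wfm_def xorM_def xorl_len set_zip)

lemma transpose_sym:
  assumes "wfm m A" "transpose A = A" "i < m" "j < m"
  shows "A ! i ! j = A ! j ! i"
proof -
  have lA: "length A = m" "\<forall>r\<in>set A. length r = m" using assms(1) by (auto simp: wfm_def)
  have "i < length (transpose A)" using assms(2,3) lA by simp
  hence "transpose A ! i = map (\<lambda>xs. xs ! i) (filter (\<lambda>ys. i < length ys) A)" by (rule nth_transpose)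
  moreover have "filter (\<lambda>ys. i < length ys) A = A" using lA assms(3) by (auto simp: filter_id_conv)
  ultimately have "A ! i = map (\<lambda>xs. xs ! i) A" using assms(2) by simp
  hence "A ! i ! j = (map (\<lambda>xs. xs ! i) A) ! j" by simp
  thus ?thesis using lA assms(4) by simp
qed

lemma wt_pos: "x \<in> bvecs m \<Longrightarrow> x \<noteq> bzero \<Longrightarrow> 0 < wt m x"
proof -
  assume x: "x \<in> bvecs m" "x \<noteq> bzero"
  then obtain i where i: "x i" by (auto simp: bzero_def fun_eq_iff)
  hence "i < m" using x(1) by (auto simp: bvecs_def) (meson not_less)
  hence "i \<in> {i. i < m \<and> x i}" using i by simp
  moreover have "finite {i. i < m \<and> x i}" by simp
  ultimately show ?thesis unfolding wt_def by (metis card_gt_0_iff empty_iff)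
qed



lemma block_list:
  assumes wA: "wfm m A" and wB: "wfm m B" and wM: "wfm m M"
  and tr: "transpose A = A"
  and AB: "mulL m A B = idl m"
  and QM: "mulL m (xorM (mulL m A A) (idl m)) M = idl m"
  and cA: "chk d t (replicate m False) A" and cB: "chk d t (replicate m False) B"
  and dt: "d \<le> 2 * t + 2"
  and w1: "length xl = m" and w2: "0 < cntl xl" and w3: "cntl xl + cntl (sel xl A (replicate m False)) = d"
  shows "fsd_LCD_code_exists (m + m) m d"
proof -
  let ?A = "mat A" and ?B = "mat B" and ?M = "mat M"
  have sym: "\<And>i j. i < m \<Longrightarrow> j < m \<Longrightarrow> ?A i j = ?A j i"
    unfolding mat_def using transpose_sym[OF wA tr] by blast
  have ABi: "\<And>i k. i < m \<Longrightarrow> k < m \<Longrightarrow> mm m ?A ?B i k = (i = k)"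
    using mulL_nth[OF wA wB] AB idl_nth by metis
  have ABx: "\<And>x. x \<in> bvecs m \<Longrightarrow> mv m ?B (mv m ?A x) = x"
  proof -
    fix x assume x: "x \<in> bvecs m"
    have "mv m ?B (mv m ?A x) = mv m (mm m ?A ?B) x" by (rule mv_assoc)
    also have "\<dots> = mv m (\<lambda>i j. i = j) x" by (rule mv_cong) (rule ABi)
    also have "\<dots> = x" by (rule mv_id[OF x])
    finally show "mv m ?B (mv m ?A x) = x" .
  qed
  let ?Ql = "xorM (mulL m A A) (idl m)"
  let ?Q = "\<lambda>i j. (i = j) \<noteq> mm m ?A ?A i j"
  have wAA: "wfm m (mulL m A A)" by (rule mulL_wfm[OF wA wA])
  have wQ: "wfm m ?Ql" by (rule xorM_wfm[OF wAA idl_wfm])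
  have Qi: "\<And>i j. i < m \<Longrightarrow> j < m \<Longrightarrow> mat ?Ql i j = ?Q i j"
  proof -
    fix i j assume i: "i < m" and j: "j < m"
    have "mat ?Ql i j = ?Ql ! i ! j" by (simp only: mat_def)
    also have "\<dots> = (mulL m A A ! i ! j \<noteq> idl m ! i ! j)" by (rule xorM_nth[OF wAA idl_wfm i j])
    also have "\<dots> = (mm m ?A ?A i j \<noteq> (i = j))" using mulL_nth[OF wA wA i j] idl_nth[OF i j] by simp
    finally show "mat ?Ql i j = ?Q i j" by auto
  qed
  have QMi: "\<And>i k. i < m \<Longrightarrow> k < m \<Longrightarrow> mm m ?Q ?M i k = (i = k)"
  proof -
    fix i k assume i: "i < m" and k: "k < m"
    have "{j. j < m \<and> ?Q i j \<and> ?M j k} = {j. j < m \<and> mat ?Ql i j \<and> ?M j k}" using Qi i by auto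
    hence "mm m ?Q ?M i k = mm m (mat ?Ql) ?M i k" by (simp add: mm_def)
    also have "\<dots> = mulL m ?Ql M ! i ! k" using mulL_nth[OF wQ wM i k] by simp
    also have "\<dots> = (i = k)" using QM idl_nth[OF i k] by simp
    finally show "mm m ?Q ?M i k = (i = k)" .
  qed
  have LCD: "\<And>x. x \<in> bvecs m \<Longrightarrow> mv m ?A (mv m ?A x) = x \<Longrightarrow> x = bzero"
  proof -
    fix x assume x: "x \<in> bvecs m" and fx: "mv m ?A (mv m ?A x) = x"
    have "mv m ?Q x = badd (mv m (\<lambda>i j. i = j) x) (mv m (mm m ?A ?A) x)" by (rule mv_add_mat)
    also have "\<dots> = badd x x" using mv_id[OF x] mv_assoc[of m ?A ?A x] fx by simp
    also have "\<dots> = bzero" by (simp add: badd_def bzero_def)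
    finally have Qx: "mv m ?Q x = bzero" .
    have "x = mv m (\<lambda>i j. i = j) x" using mv_id[OF x] by simp
    also have "\<dots> = mv m (mm m ?Q ?M) x" by (rule mv_cong) (metis QMi)
    also have "\<dots> = mv m ?M (mv m ?Q x)" by (rule mv_assoc[symmetric])
    also have "\<dots> = bzero" using Qx mv_zero by simp
    finally show "x = bzero" .
  qed
  have LB: "\<And>L x. wfm m L \<Longrightarrow> chk d t (replicate m False) L \<Longrightarrow> x \<in> bvecs m \<Longrightarrow> x \<noteq> bzero \<Longrightarrow> wt m x \<le> t \<Longrightarrow>
      d \<le> wt m x + wt m (mv m (mat L) x)"
  proof -
    fix L x assume L: "wfm m L" and c: "chk d t (replicate m False) L" and x: "x \<in> bvecs m" "x \<noteq> bzero" "wt m x \<le> t"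
    have lL: "length (lst m x) = length L" using L by (simp add: wfm_def)
    have "d \<le> cntl (lst m x) + cntl (sel (lst m x) L (replicate m False))"
      by (rule chk_sound[OF c lL]) (use wt_pos[OF x(1,2)] x(3) in \<open>simp_all add: cntl_lst\<close>)
    thus "d \<le> wt m x + wt m (mv m (mat L) x)" by (simp add: sel_mv[OF L] cntl_lst)
  qed
  define x0 where "x0 = (\<lambda>i. i < m \<and> xl ! i)"
  have lx0: "lst m x0 = xl" using w1 by (intro nth_equalityI) (auto simp: x0_def)
  have x0b: "x0 \<in> bvecs m" by (simp add: x0_def bvecs_def)
  have x0w: "wt m x0 + wt m (mv m ?A x0) = d"
    using w3 unfolding lx0[symmetric] sel_mv[OF wA] cntl_lst .
  have x0n: "x0 \<noteq> bzero"
  proof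
    assume "x0 = bzero"
    hence "cntl xl = 0" unfolding lx0[symmetric] cntl_lst by simp
    thus False using w2 by simp
  qed
  have "good (m + m) m d ((\<lambda>x. cat m x (mv m ?A x)) ` bvecs m)"
    by (rule block_sem[OF sym ABx LCD LB[OF wA cA] LB[OF wB cB] dt x0b x0n x0w])
  thus ?thesis unfolding fsd_LCD_code_exists_def good_def by blast
qed


definition A11_5 :: "bool list list" where
  "A11_5 = [[False,False,True,True,False,False,False,False,True,False,True],
  [False,True,False,True,True,True,True,True,False,True,False],
  [True,False,False,True,True,False,False,False,False,False,True],
  [True,True,True,True,True,True,False,False,False,False,False],
  [False,True,True,True,False,False,False,False,False,True,False],
  [False,True,False,True,False,True,True,True,False,False,True],
  [False,True,False,False,False,True,False,True,True,True,True],
  [False,True,False,False,False,True,True,False,True,False,False],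
  [True,False,False,False,False,False,True,True,True,True,False],
  [False,True,False,False,True,False,True,False,True,True,True],
  [True,False,True,False,False,True,True,False,False,True,True]]"

definition B11_5 :: "bool list list" where
  "B11_5 = [[True,True,False,False,False,False,True,True,False,True,True],
  [True,True,True,False,False,True,False,True,False,False,True],
  [False,True,False,False,True,False,True,False,False,True,False],
  [False,False,False,False,True,False,True,False,True,False,True],
  [False,False,True,True,False,False,True,True,True,True,True],
  [False,True,False,False,False,True,False,True,False,True,False],
  [True,False,True,True,True,False,True,True,True,False,True],
  [True,True,False,False,True,True,True,True,False,True,False],
  [False,False,False,True,True,False,True,False,True,True,False],
  [True,False,True,False,True,True,False,True,True,True,False],
  [True,True,False,True,True,False,True,False,False,False,True]]"

definition M11_5 :: "bool list list" where
  "M11_5 = [[True,True,True,False,True,False,True,False,True,False,True],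
  [True,True,True,False,False,True,False,True,True,False,True],
  [True,True,False,True,False,True,False,False,False,True,False],
  [False,False,True,False,True,False,False,False,False,True,True],
  [True,False,False,True,True,True,True,False,True,False,False],
  [False,True,True,False,True,False,False,True,False,True,False],
  [True,False,False,False,True,False,True,True,False,False,True],
  [False,True,False,False,False,True,True,False,True,False,False],
  [True,True,False,False,True,False,False,True,True,False,False],
  [False,False,True,True,False,True,False,False,False,True,True],
  [True,True,False,True,False,False,True,False,False,True,True]]"

definition X11_5 :: "bool list" where
  "X11_5 = [True,False,False,False,False,False,False,False,False,False,False]"

lemma code11_5: "fsd_LCD_code_exists (11 + 11) 11 5"
proof (rule block_list[where A="A11_5" and B="B11_5" and M="M11_5" and t=2 and xl="X11_5"])
  show "wfm 11 A11_5" by (simp add: wfm_def A11_5_def)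
  show "wfm 11 B11_5" by (simp add: wfm_def B11_5_def)
  show "wfm 11 M11_5" by (simp add: wfm_def M11_5_def)
  show "transpose A11_5 = A11_5" by (simp add: A11_5_def)
  show "mulL 11 A11_5 B11_5 = idl 11"
    by (simp add: mulL_def idl_def A11_5_def B11_5_def upt_rec numeral_eq_Suc)
  show "mulL 11 (xorM (mulL 11 A11_5 A11_5) (idl 11)) M11_5 = idl 11"
    by (simp add: mulL_def idl_def xorM_def A11_5_def M11_5_def upt_rec numeral_eq_Suc)
  show "chk 5 2 (replicate 11 False) A11_5"
    by (simp only: A11_5_def numeral_eq_Suc pred_numeral_simps BitM.simps numeral_One One_nat_def replicate_Suc replicate_0 chk.simps chk2.simps xorl.simps geq.simps not_True_eq_False not_False_eq_True simp_thms)
  show "chk 5 2 (replicate 11 False) B11_5"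
    by (simp only: B11_5_def numeral_eq_Suc pred_numeral_simps BitM.simps numeral_One One_nat_def replicate_Suc replicate_0 chk.simps chk2.simps xorl.simps geq.simps not_True_eq_False not_False_eq_True simp_thms)
  show "5 \<le> 2 * 2 + (2::nat)" by simp
  show "length X11_5 = 11" by (simp add: X11_5_def)
  show "0 < cntl X11_5" by (simp add: X11_5_def)
  show "cntl X11_5 + cntl (sel X11_5 A11_5 (replicate 11 False)) = 5"
    by (simp add: X11_5_def A11_5_def numeral_eq_Suc)
qed

definition A12_6 :: "bool list list" where
  "A12_6 = [[True,False,True,False,False,False,True,False,True,False,False,True],
  [False,True,False,False,True,True,False,True,False,True,False,True],
  [True,False,False,True,False,True,True,True,False,False,True,False],
  [False,False,True,False,True,False,True,True,True,True,True,False],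
  [False,True,False,True,False,True,False,False,True,True,False,True],
  [False,True,True,False,True,False,False,False,True,True,False,False],
  [True,False,True,True,False,False,False,True,False,True,True,True],
  [False,True,True,True,False,False,True,False,False,True,True,True],
  [True,False,False,True,True,True,False,False,True,False,True,False],
  [False,True,False,True,True,True,True,True,False,True,True,False],
  [False,False,True,True,False,False,True,True,True,True,False,True],
  [True,True,False,False,True,False,True,True,False,False,True,True]]"

definition B12_6 :: "bool list list" where
  "B12_6 = [[True,True,True,False,False,False,False,False,False,False,True,True],
  [True,False,False,False,False,True,True,False,True,True,True,True],
  [True,False,True,False,True,False,True,False,True,True,True,False],
  [False,False,False,True,False,False,True,True,False,False,True,True],
  [False,False,True,False,True,False,True,True,True,True,False,True],
  [False,True,False,False,False,False,False,True,True,True,True,True],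
  [False,True,True,True,True,False,True,True,True,False,True,True],
  [False,False,False,True,True,True,True,False,False,True,True,True],
  [False,True,True,False,True,True,True,False,True,False,False,True],
  [False,True,True,False,True,True,False,True,False,True,False,True],
  [True,True,True,True,False,True,True,True,False,False,True,True],
  [True,True,False,True,True,True,True,True,True,True,True,True]]"

definition M12_6 :: "bool list list" where
  "M12_6 = [[True,True,True,False,False,False,True,True,True,False,False,False],
  [True,True,True,False,False,False,False,False,False,True,False,False],
  [True,True,True,True,False,False,False,False,False,True,False,True],
  [False,False,True,False,True,True,False,True,False,False,False,True],
  [False,False,False,True,True,False,False,True,False,False,False,False],
  [False,False,False,True,False,True,True,True,False,True,True,False],
  [True,False,False,False,False,True,False,False,True,True,True,True],
  [True,False,False,True,True,True,False,False,False,True,False,False],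
  [True,False,False,False,False,False,True,False,True,False,False,True],
  [False,True,True,False,False,True,True,True,False,False,False,True],
  [False,False,False,False,False,True,True,False,False,False,False,True],
  [False,False,True,True,False,False,True,False,True,True,True,True]]"

definition X12_6 :: "bool list" where
  "X12_6 = [True,False,False,False,False,False,False,False,False,False,False,False]"

lemma code12_6: "fsd_LCD_code_exists (12 + 12) 12 6"
proof (rule block_list[where A="A12_6" and B="B12_6" and M="M12_6" and t=2 and xl="X12_6"])
  show "wfm 12 A12_6" by (simp add: wfm_def A12_6_def)
  show "wfm 12 B12_6" by (simp add: wfm_def B12_6_def)
  show "wfm 12 M12_6" by (simp add: wfm_def M12_6_def)
  show "transpose A12_6 = A12_6" by (simp add: A12_6_def)
  show "mulL 12 A12_6 B12_6 = idl 12"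
    by (simp add: mulL_def idl_def A12_6_def B12_6_def upt_rec numeral_eq_Suc)
  show "mulL 12 (xorM (mulL 12 A12_6 A12_6) (idl 12)) M12_6 = idl 12"
    by (simp add: mulL_def idl_def xorM_def A12_6_def M12_6_def upt_rec numeral_eq_Suc)
  show "chk 6 2 (replicate 12 False) A12_6"
    by (simp only: A12_6_def numeral_eq_Suc pred_numeral_simps BitM.simps numeral_One One_nat_def replicate_Suc replicate_0 chk.simps chk2.simps xorl.simps geq.simps not_True_eq_False not_False_eq_True simp_thms)
  show "chk 6 2 (replicate 12 False) B12_6"
    by (simp only: B12_6_def numeral_eq_Suc pred_numeral_simps BitM.simps numeral_One One_nat_def replicate_Suc replicate_0 chk.simps chk2.simps xorl.simps geq.simps not_True_eq_False not_False_eq_True simp_thms)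
  show "6 \<le> 2 * 2 + (2::nat)" by simp
  show "length X12_6 = 12" by (simp add: X12_6_def)
  show "0 < cntl X12_6" by (simp add: X12_6_def)
  show "cntl X12_6 + cntl (sel X12_6 A12_6 (replicate 12 False)) = 6"
    by (simp add: X12_6_def A12_6_def numeral_eq_Suc)
qed

definition A13_6 :: "bool list list" where
  "A13_6 = [[False,False,True,False,True,True,True,True,True,True,False,True,False],
  [False,True,True,True,True,True,True,False,False,True,False,False,False],
  [True,True,False,True,True,True,False,False,True,True,False,True,True],
  [False,True,True,True,False,False,True,False,True,False,True,True,False],
  [True,True,True,False,False,False,True,True,True,True,False,False,True],
  [True,True,True,False,False,False,True,True,False,False,True,True,False],
  [True,True,False,True,True,True,False,True,True,False,True,True,False],
  [True,False,False,False,True,True,True,False,True,True,False,False,False],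
  [True,False,True,True,True,False,True,True,False,True,True,False,False],
  [True,True,True,False,True,False,False,True,True,False,True,False,False],
  [False,False,False,True,False,True,True,False,True,True,False,True,True],
  [True,False,True,True,False,True,True,False,False,False,True,False,True],
  [False,False,True,False,True,False,False,False,False,False,True,True,True]]"

definition B13_6 :: "bool list list" where
  "B13_6 = [[True,True,True,False,False,False,False,False,True,False,False,True,False],
  [True,False,False,True,True,True,False,True,True,False,False,False,True],
  [True,False,True,True,True,True,True,True,True,True,True,True,False],
  [False,True,True,True,False,False,True,True,True,False,False,False,True],
  [False,True,True,False,True,False,False,False,False,True,True,True,False],
  [False,True,True,False,False,True,True,True,False,False,True,False,False],
  [False,False,True,True,False,True,False,True,False,True,False,False,True],
  [False,True,True,True,False,True,True,True,False,True,True,True,True],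
  [True,True,True,True,False,False,False,False,False,True,True,False,False],
  [False,False,True,False,True,False,True,True,True,True,True,False,True],
  [False,False,True,False,True,True,False,True,True,True,False,False,False],
  [True,False,True,False,True,False,False,True,False,False,False,True,True],
  [False,True,False,True,False,False,True,True,False,True,False,True,False]]"

definition M13_6 :: "bool list list" where
  "M13_6 = [[True,False,True,True,False,True,False,True,True,False,False,False,True],
  [False,False,True,False,True,False,True,True,False,False,False,True,True],
  [True,True,False,False,False,False,True,True,False,True,True,False,True],
  [True,False,False,False,False,False,True,False,True,False,False,True,False],
  [False,True,False,False,True,False,False,False,False,False,False,False,False],
  [True,False,False,False,False,False,True,True,False,True,False,False,True],
  [False,True,True,True,False,True,False,True,True,True,True,False,True],
  [True,True,True,False,False,True,True,False,True,False,False,True,False],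
  [True,False,False,True,False,False,True,True,True,False,False,True,True],
  [False,False,True,False,False,True,True,False,False,False,True,True,False],
  [False,False,True,False,False,False,True,False,False,True,False,True,True],
  [False,True,False,True,False,False,False,True,True,True,True,False,False],
  [True,True,True,False,False,True,True,False,True,False,True,False,False]]"

definition X13_6 :: "bool list" where
  "X13_6 = [False,False,False,False,False,False,False,False,False,False,False,False,True]"

lemma code13_6: "fsd_LCD_code_exists (13 + 13) 13 6"
proof (rule block_list[where A="A13_6" and B="B13_6" and M="M13_6" and t=2 and xl="X13_6"])
  show "wfm 13 A13_6" by (simp add: wfm_def A13_6_def)
  show "wfm 13 B13_6" by (simp add: wfm_def B13_6_def)
  show "wfm 13 M13_6" by (simp add: wfm_def M13_6_def)
  show "transpose A13_6 = A13_6" by (simp add: A13_6_def)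
  show "mulL 13 A13_6 B13_6 = idl 13"
    by (simp add: mulL_def idl_def A13_6_def B13_6_def upt_rec numeral_eq_Suc)
  show "mulL 13 (xorM (mulL 13 A13_6 A13_6) (idl 13)) M13_6 = idl 13"
    by (simp add: mulL_def idl_def xorM_def A13_6_def M13_6_def upt_rec numeral_eq_Suc)
  show "chk 6 2 (replicate 13 False) A13_6"
    by (simp only: A13_6_def numeral_eq_Suc pred_numeral_simps BitM.simps numeral_One One_nat_def replicate_Suc replicate_0 chk.simps chk2.simps xorl.simps geq.simps not_True_eq_False not_False_eq_True simp_thms)
  show "chk 6 2 (replicate 13 False) B13_6"
    by (simp only: B13_6_def numeral_eq_Suc pred_numeral_simps BitM.simps numeral_One One_nat_def replicate_Suc replicate_0 chk.simps chk2.simps xorl.simps geq.simps not_True_eq_False not_False_eq_True simp_thms)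
  show "6 \<le> 2 * 2 + (2::nat)" by simp
  show "length X13_6 = 13" by (simp add: X13_6_def)
  show "0 < cntl X13_6" by (simp add: X13_6_def)
  show "cntl X13_6 + cntl (sel X13_6 A13_6 (replicate 13 False)) = 6"
    by (simp add: X13_6_def A13_6_def numeral_eq_Suc)
qed

definition A14_6 :: "bool list list" where
  "A14_6 = [[True,True,True,True,True,True,True,True,False,False,False,True,False,False],
  [True,False,True,True,True,False,False,False,True,True,False,True,False,True],
  [True,True,False,False,True,False,False,False,False,True,False,True,True,False],
  [True,True,False,True,False,False,False,True,True,True,True,True,True,True],
  [True,True,True,False,False,True,True,True,True,False,False,False,False,True],
  [True,False,False,False,True,True,False,False,True,False,True,True,False,False],
  [True,False,False,False,True,False,False,True,True,False,False,True,False,True],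
  [True,False,False,True,True,False,True,True,False,False,True,False,True,False],
  [False,True,False,True,True,True,True,False,False,False,True,True,False,True],
  [False,True,True,True,False,False,False,False,False,False,True,True,False,False],
  [False,False,False,True,False,True,False,True,True,True,False,True,False,True],
  [True,True,True,True,False,True,True,False,True,True,True,False,True,True],
  [False,False,True,True,False,False,False,True,False,False,False,True,True,True],
  [False,True,False,True,True,False,True,False,True,False,True,True,True,False]]"

definition B14_6 :: "bool list list" where
  "B14_6 = [[False,True,True,False,False,False,False,True,False,False,False,False,True,True],
  [True,True,False,True,True,True,False,False,True,False,True,True,False,False],
  [True,False,False,False,True,True,True,True,True,True,True,True,True,True],
  [False,True,False,True,True,False,True,True,True,False,True,True,True,False],
  [False,True,True,True,False,True,True,False,False,False,False,True,False,True],
  [False,True,True,False,True,False,False,False,False,True,True,True,False,False],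
  [False,False,True,True,True,False,False,False,True,True,True,True,True,False],
  [True,False,True,True,False,False,False,False,True,False,True,True,False,True],
  [False,True,True,True,False,False,True,True,True,True,False,True,True,True],
  [False,False,True,False,False,True,True,False,True,True,True,True,False,False],
  [False,True,True,True,False,True,True,True,False,True,True,False,False,True],
  [False,True,True,True,True,True,True,True,True,True,False,True,False,False],
  [True,False,True,True,False,False,True,False,True,False,False,False,True,False],
  [True,False,True,False,True,False,False,True,True,False,True,False,False,False]]"

definition M14_6 :: "bool list list" where
  "M14_6 = [[False,False,False,True,True,False,True,True,True,True,True,True,True,True],
  [False,False,True,True,False,True,True,False,False,True,True,False,True,True],
  [False,True,False,True,False,True,True,False,False,True,True,False,False,False],
  [True,True,True,False,True,False,False,True,False,True,False,True,True,False],
  [True,False,False,True,False,False,True,True,True,True,False,False,True,False],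
  [False,True,True,False,False,True,False,False,False,True,False,True,True,True],
  [True,True,True,False,True,False,True,False,False,True,False,False,False,True],
  [True,False,False,True,True,False,False,False,True,False,True,True,False,True],
  [True,False,False,False,True,False,False,True,True,False,False,True,False,True],
  [True,True,True,True,True,True,True,False,False,True,False,False,True,False],
  [True,True,True,False,False,False,False,True,False,False,True,False,True,False],
  [True,False,False,True,False,True,False,True,True,False,False,True,False,False],
  [True,True,False,True,True,True,False,False,False,True,True,False,True,False],
  [True,True,False,False,False,True,True,True,True,False,False,False,False,False]]"

definition X14_6 :: "bool list" where
  "X14_6 = [False,False,False,False,False,False,False,False,False,True,False,False,False,False]"

lemma code14_6: "fsd_LCD_code_exists (14 + 14) 14 6"
proof (rule block_list[where A="A14_6" and B="B14_6" and M="M14_6" and t=2 and xl="X14_6"])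
  show "wfm 14 A14_6" by (simp add: wfm_def A14_6_def)
  show "wfm 14 B14_6" by (simp add: wfm_def B14_6_def)
  show "wfm 14 M14_6" by (simp add: wfm_def M14_6_def)
  show "transpose A14_6 = A14_6" by (simp add: A14_6_def)
  show "mulL 14 A14_6 B14_6 = idl 14"
    by (simp add: mulL_def idl_def A14_6_def B14_6_def upt_rec numeral_eq_Suc)
  show "mulL 14 (xorM (mulL 14 A14_6 A14_6) (idl 14)) M14_6 = idl 14"
    by (simp add: mulL_def idl_def xorM_def A14_6_def M14_6_def upt_rec numeral_eq_Suc)
  show "chk 6 2 (replicate 14 False) A14_6"
    by (simp only: A14_6_def numeral_eq_Suc pred_numeral_simps BitM.simps numeral_One One_nat_def replicate_Suc replicate_0 chk.simps chk2.simps xorl.simps geq.simps not_True_eq_False not_False_eq_True simp_thms)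
  show "chk 6 2 (replicate 14 False) B14_6"
    by (simp only: B14_6_def numeral_eq_Suc pred_numeral_simps BitM.simps numeral_One One_nat_def replicate_Suc replicate_0 chk.simps chk2.simps xorl.simps geq.simps not_True_eq_False not_False_eq_True simp_thms)
  show "6 \<le> 2 * 2 + (2::nat)" by simp
  show "length X14_6 = 14" by (simp add: X14_6_def)
  show "0 < cntl X14_6" by (simp add: X14_6_def)
  show "cntl X14_6 + cntl (sel X14_6 A14_6 (replicate 14 False)) = 6"
    by (simp add: X14_6_def A14_6_def numeral_eq_Suc)
qed

definition A15_6 :: "bool list list" where
  "A15_6 = [[False,False,False,True,False,True,True,False,True,True,True,True,True,False,False],
  [False,True,False,True,True,True,True,True,False,True,True,True,False,True,False],
  [False,False,False,True,False,True,True,False,True,True,False,True,False,True,True],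
  [True,True,True,False,True,True,False,False,True,True,True,False,True,False,True],
  [False,True,False,True,True,False,True,False,True,True,True,True,False,False,False],
  [True,True,True,True,False,False,True,False,True,True,True,False,True,True,False],
  [True,True,True,False,True,True,False,True,True,True,False,True,False,True,False],
  [False,True,False,False,False,False,True,True,False,True,False,True,False,True,False],
  [True,False,True,True,True,True,True,False,False,True,False,False,False,True,False],
  [True,True,True,True,True,True,True,True,True,True,True,True,True,True,False],
  [True,True,False,True,True,True,False,False,False,True,True,False,False,False,True],
  [True,True,True,False,True,False,True,True,False,True,False,True,True,False,True],
  [True,False,False,True,False,True,False,False,False,True,False,True,False,False,True],
  [False,True,True,False,False,True,True,True,True,True,False,False,False,True,True],
  [False,False,True,True,False,False,False,False,False,False,True,True,True,True,False]]"

definition B15_6 :: "bool list list" where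
  "B15_6 = [[True,False,False,True,False,True,True,True,True,True,False,False,False,True,False],
  [False,False,True,True,True,True,True,True,False,False,False,True,False,True,True],
  [False,True,True,False,True,False,True,False,True,False,True,True,False,True,True],
  [True,True,False,False,False,True,True,True,True,False,True,False,False,True,False],
  [False,True,True,False,True,True,False,False,True,False,False,False,False,True,True],
  [True,True,False,True,True,False,True,False,True,True,False,False,False,True,True],
  [True,True,True,True,False,True,False,False,False,True,False,True,False,True,True],
  [True,True,False,True,False,False,False,True,False,True,False,True,True,True,False],
  [True,False,True,True,True,True,False,False,False,True,True,False,False,True,False],
  [True,False,False,False,False,True,True,True,True,False,True,True,True,True,True],
  [False,False,True,True,False,False,False,False,True,True,True,False,False,True,False],
  [False,True,True,False,False,False,True,True,False,True,False,True,True,True,False],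
  [False,False,False,False,False,False,False,True,False,True,False,True,False,True,True],
  [True,True,True,True,True,True,True,True,True,True,True,True,True,True,True],
  [False,True,True,False,True,True,True,False,False,True,False,False,True,True,False]]"

definition M15_6 :: "bool list list" where
  "M15_6 = [[True,False,True,False,False,True,False,False,False,True,True,True,False,False,True],
  [False,True,False,False,False,True,False,False,True,True,False,False,True,True,False],
  [True,False,False,False,False,False,False,True,False,False,True,False,True,False,False],
  [False,False,False,True,False,False,True,True,True,True,False,True,True,False,False],
  [False,False,False,False,True,False,True,False,False,False,False,True,True,False,True],
  [True,True,False,False,False,True,True,True,False,False,False,False,False,True,False],
  [False,False,False,True,True,True,False,True,False,False,False,False,True,True,True],
  [False,False,True,True,False,True,True,True,True,False,True,False,True,False,True],
  [False,True,False,True,False,False,False,True,False,True,False,True,True,False,False],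
  [True,True,False,True,False,False,False,False,True,True,True,True,True,True,True],
  [True,False,True,False,False,False,False,True,False,True,True,False,True,False,True],
  [True,False,False,True,True,False,False,False,True,True,False,True,True,True,False],
  [False,True,True,True,True,False,True,True,True,True,True,True,True,False,False],
  [False,True,False,False,False,True,True,False,False,True,False,True,False,False,True],
  [True,False,False,False,True,False,True,True,False,True,True,False,False,True,True]]"

definition X15_6 :: "bool list" where
  "X15_6 = [True,False,True,False,False,False,False,False,False,False,False,False,False,False,False]"

lemma code15_6: "fsd_LCD_code_exists (15 + 15) 15 6"
proof (rule block_list[where A="A15_6" and B="B15_6" and M="M15_6" and t=2 and xl="X15_6"])
  show "wfm 15 A15_6" by (simp add: wfm_def A15_6_def)
  show "wfm 15 B15_6" by (simp add: wfm_def B15_6_def)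
  show "wfm 15 M15_6" by (simp add: wfm_def M15_6_def)
  show "transpose A15_6 = A15_6" by (simp add: A15_6_def)
  show "mulL 15 A15_6 B15_6 = idl 15"
    by (simp add: mulL_def idl_def A15_6_def B15_6_def upt_rec numeral_eq_Suc)
  show "mulL 15 (xorM (mulL 15 A15_6 A15_6) (idl 15)) M15_6 = idl 15"
    by (simp add: mulL_def idl_def xorM_def A15_6_def M15_6_def upt_rec numeral_eq_Suc)
  show "chk 6 2 (replicate 15 False) A15_6"
    by (simp only: A15_6_def numeral_eq_Suc pred_numeral_simps BitM.simps numeral_One One_nat_def replicate_Suc replicate_0 chk.simps chk2.simps xorl.simps geq.simps not_True_eq_False not_False_eq_True simp_thms)
  show "chk 6 2 (replicate 15 False) B15_6"
    by (simp only: B15_6_def numeral_eq_Suc pred_numeral_simps BitM.simps numeral_One One_nat_def replicate_Suc replicate_0 chk.simps chk2.simps xorl.simps geq.simps not_True_eq_False not_False_eq_True simp_thms)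
  show "6 \<le> 2 * 2 + (2::nat)" by simp
  show "length X15_6 = 15" by (simp add: X15_6_def)
  show "0 < cntl X15_6" by (simp add: X15_6_def)
  show "cntl X15_6 + cntl (sel X15_6 A15_6 (replicate 15 False)) = 6"
    by (simp add: X15_6_def A15_6_def numeral_eq_Suc)
qed

definition A16_6 :: "bool list list" where
  "A16_6 = [[False,True,True,False,True,True,True,False,True,True,True,True,False,True,True,True],
  [True,True,False,False,False,True,True,False,True,False,False,True,False,True,False,True],
  [True,False,False,False,True,False,True,True,True,False,False,True,True,False,True,True],
  [False,False,False,False,False,False,False,True,True,False,True,True,True,True,False,True],
  [True,False,True,False,False,False,True,True,True,False,True,True,True,False,True,False],
  [True,True,False,False,False,True,False,True,False,True,True,True,True,False,False,True],
  [True,True,True,False,True,False,False,True,True,True,True,True,True,True,True,False],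
  [False,False,True,True,True,True,True,False,False,True,False,False,False,True,False,True],
  [True,True,True,True,True,False,True,False,True,False,True,False,True,True,False,False],
  [True,False,False,False,False,True,True,True,False,False,False,True,False,False,True,False],
  [True,False,False,True,True,True,True,False,True,False,True,False,True,True,True,False],
  [True,True,True,True,True,True,True,False,False,True,False,True,True,True,False,True],
  [False,False,True,True,True,True,True,False,True,False,True,True,False,False,True,False],
  [True,True,False,True,False,False,True,True,True,False,True,True,False,True,True,True],
  [True,False,True,False,True,False,True,False,False,True,True,False,True,True,True,True],
  [True,True,True,True,False,True,False,True,False,False,False,True,False,True,True,False]]"

definition B16_6 :: "bool list list" where
  "B16_6 = [[False,False,True,True,False,True,True,False,False,False,False,False,False,True,False,True],
  [False,False,True,False,False,True,False,True,True,True,True,False,False,True,False,False],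
  [True,True,True,False,True,True,False,False,True,False,False,True,True,False,True,True],
  [True,False,False,True,True,False,True,True,False,False,False,True,False,False,False,True],
  [False,False,True,True,False,False,True,True,False,True,True,True,True,True,True,True],
  [True,True,True,False,False,False,False,True,False,True,True,False,False,False,False,False],
  [True,False,False,True,True,False,True,False,False,True,True,False,True,False,False,False],
  [False,True,False,True,True,True,False,True,False,False,True,False,False,False,False,False],
  [False,True,True,False,False,False,False,False,False,True,True,True,False,False,True,False],
  [False,True,False,False,True,True,True,False,True,False,True,True,False,True,False,False],
  [False,True,False,False,True,True,True,True,True,True,True,False,True,False,True,False],
  [False,False,True,True,True,False,False,False,True,True,False,True,False,False,True,False],
  [False,False,True,False,True,False,True,False,False,False,True,False,False,False,True,True],
  [True,True,False,False,True,False,False,False,False,True,False,False,False,True,True,True],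
  [False,False,True,False,True,False,False,False,True,False,True,True,True,True,True,True],
  [True,False,True,True,True,False,False,False,False,False,False,False,True,True,True,False]]"

definition M16_6 :: "bool list list" where
  "M16_6 = [[True,True,False,False,True,True,False,True,True,True,False,True,False,False,True,True],
  [True,True,False,False,True,True,True,False,True,False,True,True,False,True,True,True],
  [False,False,False,True,False,True,True,True,True,False,True,True,False,False,True,True],
  [False,False,True,True,False,False,False,True,True,False,False,True,True,False,False,True],
  [True,True,False,False,False,True,False,True,False,True,False,True,True,True,True,True],
  [True,True,True,False,True,True,True,True,True,True,True,False,False,True,False,False],
  [False,True,True,False,False,True,False,True,True,True,True,False,True,False,True,True],
  [True,False,True,True,True,True,True,True,True,False,False,True,False,False,False,False],
  [True,True,True,True,False,True,True,True,False,False,False,True,False,True,True,True],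
  [True,False,False,False,True,True,True,False,False,True,True,True,True,True,False,False],
  [False,True,True,False,False,True,True,False,False,True,True,True,True,True,False,True],
  [True,True,True,True,True,False,False,True,True,True,True,False,True,True,False,False],
  [False,False,False,True,True,False,True,False,False,True,True,True,True,True,True,False],
  [False,True,False,False,True,True,False,False,True,True,True,True,True,False,True,True],
  [True,True,True,False,True,False,True,False,True,False,False,False,True,True,True,False],
  [True,True,True,True,True,False,True,False,True,False,True,False,False,True,False,True]]"

definition X16_6 :: "bool list" where
  "X16_6 = [False,False,True,False,True,False,False,False,False,False,False,False,False,False,False,False]"

lemma code16_6: "fsd_LCD_code_exists (16 + 16) 16 6"
proof (rule block_list[where A="A16_6" and B="B16_6" and M="M16_6" and t=2 and xl="X16_6"])
  show "wfm 16 A16_6" by (simp add: wfm_def A16_6_def)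
  show "wfm 16 B16_6" by (simp add: wfm_def B16_6_def)
  show "wfm 16 M16_6" by (simp add: wfm_def M16_6_def)
  show "transpose A16_6 = A16_6" by (simp add: A16_6_def)
  show "mulL 16 A16_6 B16_6 = idl 16"
    by (simp add: mulL_def idl_def A16_6_def B16_6_def upt_rec numeral_eq_Suc)
  show "mulL 16 (xorM (mulL 16 A16_6 A16_6) (idl 16)) M16_6 = idl 16"
    by (simp add: mulL_def idl_def xorM_def A16_6_def M16_6_def upt_rec numeral_eq_Suc)
  show "chk 6 2 (replicate 16 False) A16_6"
    by (simp only: A16_6_def numeral_eq_Suc pred_numeral_simps BitM.simps numeral_One One_nat_def replicate_Suc replicate_0 chk.simps chk2.simps xorl.simps geq.simps not_True_eq_False not_False_eq_True simp_thms)
  show "chk 6 2 (replicate 16 False) B16_6"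
    by (simp only: B16_6_def numeral_eq_Suc pred_numeral_simps BitM.simps numeral_One One_nat_def replicate_Suc replicate_0 chk.simps chk2.simps xorl.simps geq.simps not_True_eq_False not_False_eq_True simp_thms)
  show "6 \<le> 2 * 2 + (2::nat)" by simp
  show "length X16_6 = 16" by (simp add: X16_6_def)
  show "0 < cntl X16_6" by (simp add: X16_6_def)
  show "cntl X16_6 + cntl (sel X16_6 A16_6 (replicate 16 False)) = 6"
    by (simp add: X16_6_def A16_6_def numeral_eq_Suc)
qed

definition A17_7 :: "bool list list" where
  "A17_7 = [[False,False,False,False,False,False,True,False,False,True,False,True,True,True,True,False,True],
  [False,True,True,True,True,False,True,True,False,True,True,False,False,False,False,False,True],
  [False,True,False,True,True,True,False,False,True,True,False,True,False,False,False,True,True],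
  [False,True,True,False,False,True,False,True,True,False,False,True,True,True,False,False,True],
  [False,True,True,False,True,False,False,True,True,True,True,False,True,True,True,True,True],
  [False,False,True,True,False,True,True,False,True,True,False,False,False,False,True,True,True],
  [True,True,False,False,False,True,True,True,True,True,True,True,True,True,False,False,True],
  [False,True,False,True,True,False,True,False,True,True,True,True,True,True,True,True,False],
  [False,False,True,True,True,True,True,True,True,False,True,False,True,False,False,True,False],
  [True,True,True,False,True,True,True,True,False,True,False,False,False,False,True,False,True],
  [False,True,False,False,True,False,True,True,True,False,False,False,False,True,True,False,False],
  [True,False,True,True,False,False,True,True,False,False,False,False,True,True,True,True,True],
  [True,False,False,True,True,False,True,True,True,False,False,True,True,True,False,False,False],
  [True,False,False,True,True,False,True,True,False,False,True,True,True,False,True,False,True],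
  [True,False,False,False,True,True,False,True,False,True,True,True,False,True,False,True,False],
  [False,False,True,False,True,True,False,True,True,False,False,True,False,False,True,False,False],
  [True,True,True,True,True,True,True,False,False,True,False,True,False,True,False,False,False]]"

definition B17_7 :: "bool list list" where
  "B17_7 = [[True,False,True,False,False,True,False,False,True,True,True,False,False,False,True,False,True],
  [False,True,False,False,True,True,False,False,False,True,True,True,True,True,True,False,True],
  [True,False,True,True,False,True,True,True,False,False,True,True,True,False,False,True,True],
  [False,False,True,False,True,True,True,True,True,True,False,False,True,True,True,True,True],
  [False,True,False,True,False,False,True,True,True,True,False,True,False,True,True,False,True],
  [True,True,True,True,False,True,True,True,True,False,True,False,True,False,False,False,False],
  [False,False,True,True,True,True,True,False,False,False,True,False,False,True,True,False,True],
  [False,False,True,True,True,True,False,False,True,False,True,True,True,True,True,True,False],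
  [True,False,False,True,True,True,False,True,False,True,False,False,True,True,True,False,False],
  [True,True,False,True,True,False,False,False,True,True,False,True,True,False,True,False,False],
  [True,True,True,False,False,True,True,True,False,False,True,False,False,True,True,True,True],
  [False,True,True,False,True,False,False,True,False,True,False,True,False,True,False,True,True],
  [False,True,True,True,False,True,False,True,True,True,False,False,True,True,False,False,True],
  [False,True,False,True,True,False,True,True,True,False,True,True,True,True,False,True,False],
  [True,True,False,True,True,False,True,True,True,True,True,False,False,False,True,False,True],
  [False,False,True,True,False,False,False,True,False,False,True,True,False,True,False,False,False],
  [True,True,True,True,True,False,True,False,False,False,True,True,True,False,True,False,False]]"

definition M17_7 :: "bool list list" where
  "M17_7 = [[False,False,False,False,False,False,True,False,True,True,True,False,True,True,True,True,False],
  [False,True,True,False,True,True,False,False,False,True,True,True,True,True,False,False,True],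
  [False,True,True,False,False,True,True,False,False,True,False,False,True,True,True,True,False],
  [False,False,False,True,False,False,False,False,True,True,False,True,True,True,False,False,True],
  [False,True,False,False,True,True,True,True,False,False,False,False,False,False,False,False,False],
  [False,True,True,False,True,True,True,False,True,True,False,False,True,False,True,False,True],
  [True,False,True,False,True,True,True,False,True,True,True,True,False,True,True,False,True],
  [False,False,False,False,True,False,False,False,True,False,False,False,True,False,True,True,False],
  [True,False,False,True,False,True,True,True,False,True,False,False,False,False,False,True,True],
  [True,True,True,True,False,True,True,False,True,False,True,True,False,False,False,False,True],
  [True,True,False,False,False,False,True,False,False,True,False,False,True,False,True,False,False],
  [False,True,False,True,False,False,True,False,False,True,False,True,False,False,False,False,False],
  [True,True,True,True,False,True,False,True,False,False,True,False,False,False,True,True,True],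
  [True,True,True,True,False,False,True,False,False,False,False,False,False,True,True,False,True],
  [True,False,True,False,False,True,True,True,False,False,True,False,True,True,True,True,False],
  [True,False,True,False,False,False,False,True,True,False,False,False,True,False,True,False,False],
  [False,True,False,True,False,True,True,False,True,True,False,False,True,True,False,False,True]]"

definition X17_7 :: "bool list" where
  "X17_7 = [False,True,False,False,False,False,False,False,False,True,False,False,False,False,False,False,False]"

lemma code17_7: "fsd_LCD_code_exists (17 + 17) 17 7"
proof (rule block_list[where A="A17_7" and B="B17_7" and M="M17_7" and t=3 and xl="X17_7"])
  show "wfm 17 A17_7" by (simp add: wfm_def A17_7_def)
  show "wfm 17 B17_7" by (simp add: wfm_def B17_7_def)
  show "wfm 17 M17_7" by (simp add: wfm_def M17_7_def)
  show "transpose A17_7 = A17_7" by (simp add: A17_7_def)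
  show "mulL 17 A17_7 B17_7 = idl 17"
    by (simp add: mulL_def idl_def A17_7_def B17_7_def upt_rec numeral_eq_Suc)
  show "mulL 17 (xorM (mulL 17 A17_7 A17_7) (idl 17)) M17_7 = idl 17"
    by (simp add: mulL_def idl_def xorM_def A17_7_def M17_7_def upt_rec numeral_eq_Suc)
  show "chk 7 3 (replicate 17 False) A17_7"
    by (simp only: A17_7_def numeral_eq_Suc pred_numeral_simps BitM.simps numeral_One One_nat_def replicate_Suc replicate_0 chk.simps chk2.simps xorl.simps geq.simps not_True_eq_False not_False_eq_True simp_thms)
  show "chk 7 3 (replicate 17 False) B17_7"
    by (simp only: B17_7_def numeral_eq_Suc pred_numeral_simps BitM.simps numeral_One One_nat_def replicate_Suc replicate_0 chk.simps chk2.simps xorl.simps geq.simps not_True_eq_False not_False_eq_True simp_thms)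
  show "7 \<le> 2 * 3 + (2::nat)" by simp
  show "length X17_7 = 17" by (simp add: X17_7_def)
  show "0 < cntl X17_7" by (simp add: X17_7_def)
  show "cntl X17_7 + cntl (sel X17_7 A17_7 (replicate 17 False)) = 7"
    by (simp add: X17_7_def A17_7_def numeral_eq_Suc)
qed

definition A18_7 :: "bool list list" where
  "A18_7 = [[True,False,True,False,False,False,False,False,False,True,False,True,True,True,True,False,False,True],
  [False,False,False,True,False,False,False,True,True,False,False,True,False,False,False,False,True,True],
  [True,False,False,False,True,False,True,True,True,True,False,True,False,False,True,True,False,True],
  [False,True,False,True,False,True,True,True,True,False,False,False,False,True,False,False,True,False],
  [False,False,True,False,False,False,True,False,False,False,True,True,True,True,False,True,False,False],
  [False,False,False,True,False,False,True,True,True,True,False,False,True,True,True,True,False,True],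
  [False,False,True,True,True,True,True,False,True,False,False,True,False,False,False,True,False,True],
  [False,True,True,True,False,True,False,True,True,True,False,False,False,False,False,False,True,True],
  [False,True,True,True,False,True,True,True,False,True,True,False,True,False,False,True,True,False],
  [True,False,True,False,False,True,False,True,True,True,True,True,False,True,False,False,True,False],
  [False,False,False,False,True,False,False,False,True,True,True,False,True,True,True,False,True,False],
  [True,True,True,False,True,False,True,False,False,True,False,False,False,True,True,False,False,False],
  [True,False,False,False,True,True,False,False,True,False,True,False,False,False,False,True,True,True],
  [True,False,False,True,True,True,False,False,False,True,True,True,False,True,True,False,False,False],
  [True,False,True,False,False,True,False,False,False,False,True,True,False,True,True,True,True,False],
  [False,False,True,False,True,True,True,False,True,False,False,False,True,False,True,False,False,True],
  [False,True,False,True,False,False,False,True,True,True,True,False,True,False,True,False,False,False],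
  [True,True,True,False,False,True,True,True,False,False,False,False,True,False,False,True,False,True]]"

definition B18_7 :: "bool list list" where
  "B18_7 = [[True,True,True,False,False,True,False,True,True,False,False,True,True,True,False,False,True,False],
  [True,True,True,False,True,False,False,False,True,True,False,False,False,False,True,True,False,False],
  [True,True,False,False,True,False,True,False,False,True,False,False,True,False,True,False,False,False],
  [False,False,False,True,False,True,False,False,False,False,True,True,False,False,False,False,True,True],
  [False,True,True,False,True,False,True,True,False,False,True,False,True,False,False,True,True,False],
  [True,False,False,True,False,False,True,True,True,True,True,True,True,True,False,True,True,True],
  [False,False,True,False,True,True,False,True,False,True,True,True,False,False,True,True,False,False],
  [True,False,False,False,True,True,True,False,True,False,False,False,True,True,False,True,False,True],
  [True,True,False,False,False,True,False,True,True,False,False,False,False,True,True,True,True,True],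
  [False,True,True,False,False,True,True,False,False,False,True,True,False,True,False,True,False,True],
  [False,False,False,True,True,True,True,False,False,True,True,False,False,False,True,False,True,False],
  [True,False,False,True,False,True,True,False,False,True,False,False,False,False,False,True,True,False],
  [True,False,True,False,True,True,False,True,False,False,False,False,True,True,False,True,True,False],
  [True,False,False,False,False,True,False,True,True,True,False,False,True,False,False,True,True,True],
  [False,True,True,False,False,False,True,False,True,False,True,False,False,False,True,True,True,False],
  [False,True,False,False,True,True,True,True,True,True,False,True,True,True,True,False,False,True],
  [True,False,False,True,True,True,False,False,True,False,True,True,True,True,True,False,False,True],
  [False,False,False,True,False,True,False,True,True,True,False,False,False,True,False,True,True,False]]"

definition M18_7 :: "bool list list" where
  "M18_7 = [[True,True,False,True,False,False,True,True,True,False,False,False,True,False,False,True,False,False],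
  [True,False,True,False,True,True,True,False,True,True,False,False,False,True,False,True,True,True],
  [False,True,False,True,False,False,True,False,True,True,True,True,False,True,False,True,False,False],
  [True,False,True,True,False,False,True,False,True,False,True,True,False,False,True,True,True,True],
  [False,True,False,False,True,True,False,False,True,True,True,True,True,False,False,True,False,False],
  [False,True,False,False,True,True,True,True,False,False,True,True,True,False,False,False,False,False],
  [True,True,True,True,False,True,True,False,False,False,True,True,False,False,True,True,True,False],
  [True,False,False,False,False,True,False,True,True,True,False,False,True,True,True,False,True,True],
  [True,True,True,True,True,False,False,True,True,False,False,True,True,True,False,False,True,True],
  [False,True,True,False,True,False,False,True,False,True,False,True,True,False,False,False,False,True],
  [False,False,True,True,True,True,True,False,False,False,True,True,False,False,False,True,True,False],
  [False,False,True,True,True,True,True,False,True,True,True,True,False,False,True,True,False,True],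
  [True,False,False,False,True,True,False,True,True,True,False,False,True,True,False,True,False,True],
  [False,True,True,False,False,False,False,True,True,False,False,False,True,False,True,True,False,True],
  [False,False,False,True,False,False,True,True,False,False,False,True,False,True,False,True,True,False],
  [True,True,True,True,True,False,True,False,False,False,True,True,True,True,True,False,True,True],
  [False,True,False,True,False,False,True,True,True,False,True,False,False,False,True,True,True,False],
  [False,True,False,True,False,False,False,True,True,True,False,True,True,True,False,True,False,False]]"

definition X18_7 :: "bool list" where
  "X18_7 = [False,True,False,False,False,False,False,False,False,False,False,False,False,False,False,False,False,False]"

lemma code18_7: "fsd_LCD_code_exists (18 + 18) 18 7"
proof (rule block_list[where A="A18_7" and B="B18_7" and M="M18_7" and t=3 and xl="X18_7"])
  show "wfm 18 A18_7" by (simp add: wfm_def A18_7_def)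
  show "wfm 18 B18_7" by (simp add: wfm_def B18_7_def)
  show "wfm 18 M18_7" by (simp add: wfm_def M18_7_def)
  show "transpose A18_7 = A18_7" by (simp add: A18_7_def)
  show "mulL 18 A18_7 B18_7 = idl 18"
    by (simp add: mulL_def idl_def A18_7_def B18_7_def upt_rec numeral_eq_Suc)
  show "mulL 18 (xorM (mulL 18 A18_7 A18_7) (idl 18)) M18_7 = idl 18"
    by (simp add: mulL_def idl_def xorM_def A18_7_def M18_7_def upt_rec numeral_eq_Suc)
  show "chk 7 3 (replicate 18 False) A18_7"
    by (simp only: A18_7_def numeral_eq_Suc pred_numeral_simps BitM.simps numeral_One One_nat_def replicate_Suc replicate_0 chk.simps chk2.simps xorl.simps geq.simps not_True_eq_False not_False_eq_True simp_thms)
  show "chk 7 3 (replicate 18 False) B18_7"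
    by (simp only: B18_7_def numeral_eq_Suc pred_numeral_simps BitM.simps numeral_One One_nat_def replicate_Suc replicate_0 chk.simps chk2.simps xorl.simps geq.simps not_True_eq_False not_False_eq_True simp_thms)
  show "7 \<le> 2 * 3 + (2::nat)" by simp
  show "length X18_7 = 18" by (simp add: X18_7_def)
  show "0 < cntl X18_7" by (simp add: X18_7_def)
  show "cntl X18_7 + cntl (sel X18_7 A18_7 (replicate 18 False)) = 7"
    by (simp add: X18_7_def A18_7_def numeral_eq_Suc)
qed

definition A19_7 :: "bool list list" where
  "A19_7 = [[True,False,False,False,True,True,False,False,True,True,True,False,False,False,False,True,False,True,True],
  [False,True,True,True,False,False,True,True,False,True,True,True,False,True,True,True,True,False,True],
  [False,True,True,True,True,True,False,True,False,True,False,False,False,False,False,False,True,True,True],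
  [False,True,True,False,True,False,True,True,False,False,False,True,True,False,False,False,False,True,False],
  [True,False,True,True,False,True,False,True,False,True,True,True,False,True,True,False,True,False,False],
  [True,False,True,False,True,False,False,True,True,False,True,False,False,True,True,True,True,True,True],
  [False,True,False,True,False,False,True,False,False,True,True,True,True,False,False,True,False,True,True],
  [False,True,True,True,True,True,False,False,True,False,False,False,True,False,False,False,True,False,False],
  [True,False,False,False,False,True,False,True,False,False,False,True,True,False,False,False,False,True,False],
  [True,True,True,False,True,False,True,False,False,True,False,True,False,True,True,True,False,False,False],
  [True,True,False,False,True,True,True,False,False,False,True,True,True,False,False,True,True,False,True],
  [False,True,False,True,True,False,True,False,True,True,True,True,True,False,True,True,True,False,True],
  [False,False,False,True,False,False,True,True,True,False,True,True,True,True,False,False,False,True,True],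
  [False,True,False,False,True,True,False,False,False,True,False,False,True,False,False,False,True,False,True],
  [False,True,False,False,True,True,False,False,False,True,False,True,False,False,True,True,True,True,True],
  [True,True,False,False,False,True,True,False,False,True,True,True,False,False,True,False,True,True,True],
  [False,True,True,False,True,True,False,True,False,False,True,True,False,True,True,True,False,False,False],
  [True,False,True,True,False,True,True,False,True,False,False,False,True,False,True,True,False,False,True],
  [True,True,True,False,False,True,True,False,False,False,True,True,True,True,True,True,False,True,False]]"

definition B19_7 :: "bool list list" where
  "B19_7 = [[True,False,False,True,True,True,True,True,True,False,False,True,False,True,False,True,False,False,False],
  [False,True,False,False,False,True,False,True,True,True,True,True,False,True,True,True,True,True,False],
  [False,False,False,False,False,True,True,False,True,False,False,False,True,False,False,True,True,False,True],
  [True,False,False,True,False,False,False,True,True,False,False,False,True,True,True,True,True,True,False],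
  [True,False,False,False,True,False,False,False,True,False,True,True,False,False,False,True,False,False,True],
  [True,True,True,False,False,True,False,False,True,True,True,True,True,True,False,False,True,False,True],
  [True,False,True,False,False,False,False,False,False,False,True,False,False,True,True,False,True,True,True],
  [True,True,False,True,False,False,False,True,True,False,False,False,False,False,True,True,False,False,True],
  [True,True,True,True,True,True,False,True,False,False,True,True,False,True,True,True,True,True,False],
  [False,True,False,False,False,True,False,False,False,True,True,True,True,True,False,True,True,True,True],
  [False,True,False,False,True,True,True,False,True,True,True,True,False,False,False,True,False,False,False],
  [True,True,False,False,True,True,False,False,True,True,True,False,True,False,True,True,True,True,False],
  [False,False,True,True,False,True,False,False,False,True,False,True,True,False,True,False,False,True,True],
  [True,True,False,True,False,True,True,False,True,True,False,False,False,True,True,False,False,False,False],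
  [False,True,False,True,False,False,True,True,True,False,False,True,True,True,False,False,False,True,False],
  [True,True,True,True,True,False,False,True,True,True,True,True,False,False,False,False,True,True,False],
  [False,True,True,True,False,True,True,False,True,True,False,True,False,False,False,True,True,False,False],
  [False,True,False,True,False,False,True,False,True,True,False,True,True,False,True,True,False,False,True],
  [False,False,True,False,True,True,True,True,False,True,False,False,True,False,False,False,False,True,False]]"

definition M19_7 :: "bool list list" where
  "M19_7 = [[False,True,False,False,False,True,False,True,True,False,False,False,True,False,True,True,True,True,True],
  [True,False,False,False,True,True,False,True,True,True,False,False,True,True,True,False,True,True,False],
  [False,False,True,True,True,True,False,True,True,False,True,False,True,True,True,False,False,False,False],
  [False,False,True,False,True,True,False,False,False,False,True,True,False,True,True,True,True,True,True],
  [False,True,True,True,False,True,True,True,False,True,True,False,True,False,False,True,True,False,False],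
  [True,True,True,True,True,True,False,False,False,False,True,False,True,True,True,True,False,True,True],
  [False,False,False,False,True,False,True,False,False,True,True,False,False,True,False,True,False,True,False],
  [True,True,True,False,True,False,False,True,True,True,False,False,False,False,False,False,False,False,True],
  [True,True,True,False,False,False,False,True,True,True,True,True,True,False,True,True,False,False,True],
  [False,True,False,False,True,False,True,True,True,True,False,True,True,True,False,True,True,False,True],
  [False,False,True,True,True,True,True,False,True,False,False,False,True,False,False,True,False,True,True],
  [False,False,False,True,False,False,False,False,True,True,False,False,False,False,True,False,True,True,False],
  [True,True,True,False,True,True,False,False,True,True,True,False,False,True,True,False,False,False,True],
  [False,True,True,True,False,True,True,False,False,True,False,False,True,True,True,False,True,False,True],
  [True,True,True,True,False,True,False,False,True,False,False,True,True,True,True,True,False,False,True],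
  [True,False,False,True,True,True,True,False,True,True,True,False,False,False,True,True,False,True,False],
  [True,True,False,True,True,False,False,False,False,True,False,True,False,True,False,False,True,True,True],
  [True,True,False,True,False,True,True,False,False,False,True,True,False,False,False,True,True,False,False],
  [True,False,False,True,False,True,False,True,True,True,True,False,True,True,True,False,True,False,True]]"

definition X19_7 :: "bool list" where
  "X19_7 = [False,False,False,False,False,False,False,False,True,False,False,False,False,False,False,False,False,False,False]"

lemma code19_7: "fsd_LCD_code_exists (19 + 19) 19 7"
proof (rule block_list[where A="A19_7" and B="B19_7" and M="M19_7" and t=3 and xl="X19_7"])
  show "wfm 19 A19_7" by (simp add: wfm_def A19_7_def)
  show "wfm 19 B19_7" by (simp add: wfm_def B19_7_def)
  show "wfm 19 M19_7" by (simp add: wfm_def M19_7_def)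
  show "transpose A19_7 = A19_7" by (simp add: A19_7_def)
  show "mulL 19 A19_7 B19_7 = idl 19"
    by (simp add: mulL_def idl_def A19_7_def B19_7_def upt_rec numeral_eq_Suc)
  show "mulL 19 (xorM (mulL 19 A19_7 A19_7) (idl 19)) M19_7 = idl 19"
    by (simp add: mulL_def idl_def xorM_def A19_7_def M19_7_def upt_rec numeral_eq_Suc)
  show "chk 7 3 (replicate 19 False) A19_7"
    by (simp only: A19_7_def numeral_eq_Suc pred_numeral_simps BitM.simps numeral_One One_nat_def replicate_Suc replicate_0 chk.simps chk2.simps xorl.simps geq.simps not_True_eq_False not_False_eq_True simp_thms)
  show "chk 7 3 (replicate 19 False) B19_7"
    by (simp only: B19_7_def numeral_eq_Suc pred_numeral_simps BitM.simps numeral_One One_nat_def replicate_Suc replicate_0 chk.simps chk2.simps xorl.simps geq.simps not_True_eq_False not_False_eq_True simp_thms)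
  show "7 \<le> 2 * 3 + (2::nat)" by simp
  show "length X19_7 = 19" by (simp add: X19_7_def)
  show "0 < cntl X19_7" by (simp add: X19_7_def)
  show "cntl X19_7 + cntl (sel X19_7 A19_7 (replicate 19 False)) = 7"
    by (simp add: X19_7_def A19_7_def numeral_eq_Suc)
qed

definition A20_8 :: "bool list list" where
  "A20_8 = [[True,True,True,True,False,False,True,True,False,False,False,False,True,False,True,False,True,False,True,True],
  [True,True,True,False,True,False,True,False,True,False,False,False,True,False,False,True,False,False,False,True],
  [True,True,True,False,True,False,True,True,False,True,True,True,True,False,False,False,False,False,True,True],
  [True,False,False,True,True,True,False,False,False,False,False,True,False,True,False,True,True,False,False,True],
  [False,True,True,True,False,False,False,True,True,True,True,False,True,True,False,False,False,True,True,False],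
  [False,False,False,True,False,True,False,False,False,True,False,False,True,True,False,True,False,True,True,True],
  [True,True,True,False,False,False,False,False,False,False,True,False,True,True,True,False,True,False,False,True],
  [True,False,True,False,True,False,False,True,True,True,True,True,True,True,False,True,False,True,False,True],
  [False,True,False,False,True,False,False,True,False,False,False,False,False,False,False,True,True,True,False,True],
  [False,False,True,False,True,True,False,True,False,False,False,True,True,True,False,True,True,True,True,False],
  [False,False,True,False,True,False,True,True,False,False,False,True,False,True,True,True,False,True,False,True],
  [False,False,True,True,False,False,False,True,False,True,True,False,False,True,False,False,True,False,False,False],
  [True,True,True,False,True,True,True,True,False,True,False,False,False,False,False,True,True,False,True,False],
  [False,False,False,True,True,True,True,True,False,True,True,True,False,True,False,True,True,False,False,False],
  [True,False,False,False,False,False,True,False,False,False,True,False,False,False,True,True,True,True,True,False],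
  [False,True,False,True,False,True,False,True,True,True,True,False,True,True,True,True,True,True,False,False],
  [True,False,False,True,False,False,True,False,True,True,False,True,True,True,True,True,True,True,True,False],
  [False,False,False,False,True,True,False,True,True,True,True,False,False,False,True,True,True,False,False,True],
  [True,False,True,False,True,True,False,False,False,True,False,False,True,False,True,False,True,False,True,False],
  [True,True,True,True,False,True,True,True,True,False,True,False,False,False,False,False,False,True,False,False]]"

definition B20_8 :: "bool list list" where
  "B20_8 = [[True,False,False,False,False,True,True,True,True,False,True,False,True,True,True,False,True,False,True,False],
  [False,False,True,False,True,True,False,False,False,False,False,True,True,False,True,False,True,False,False,False],
  [False,True,True,True,True,True,False,False,False,False,False,False,False,True,False,True,True,False,False,False],
  [False,False,True,False,True,False,True,True,True,False,False,True,True,True,True,False,True,False,True,True],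
  [False,True,True,True,False,False,True,True,False,False,False,False,True,False,False,False,True,True,True,False],
  [True,True,True,False,False,False,True,True,False,False,False,True,False,True,False,True,True,True,True,True],
  [True,False,False,True,True,True,False,True,False,True,False,True,False,True,False,True,False,False,False,True],
  [True,False,False,True,True,True,True,True,False,True,False,True,True,False,True,False,True,True,True,False],
  [True,False,False,True,False,False,False,False,True,True,False,True,True,True,False,True,True,True,False,False],
  [False,False,False,False,False,False,True,True,True,True,False,False,False,False,True,True,False,True,False,True],
  [True,False,False,False,False,False,False,False,False,False,True,True,False,False,True,True,True,False,True,False],
  [False,True,False,True,False,True,True,True,True,False,True,True,False,False,True,False,False,True,False,True],
  [True,True,False,True,True,False,False,True,True,False,False,False,True,True,True,True,True,True,True,False],
  [True,False,True,True,False,True,True,False,True,False,False,False,True,True,False,False,True,False,True,True],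
  [True,True,False,True,False,False,False,True,False,True,True,True,True,False,False,True,False,True,True,False],
  [False,False,True,False,False,True,True,False,True,True,True,False,True,False,True,True,True,True,False,True],
  [True,True,True,True,True,True,False,True,True,False,True,False,True,True,False,True,True,False,False,True],
  [False,False,False,False,True,True,False,True,True,True,False,True,True,False,True,True,False,True,True,False],
  [True,False,False,True,True,True,False,True,False,False,True,False,True,True,True,False,False,True,False,True],
  [False,False,False,True,False,True,True,False,False,True,False,True,False,True,False,True,True,False,True,False]]"

definition M20_8 :: "bool list list" where
  "M20_8 = [[True,False,False,True,False,True,False,False,True,False,True,False,True,True,False,False,True,False,True,False],
  [False,False,True,False,True,False,False,True,False,True,True,False,True,False,True,False,True,True,False,False],
  [False,True,True,True,False,False,True,True,False,False,True,True,False,False,False,True,True,True,False,False],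
  [True,False,True,False,True,False,True,False,False,False,True,False,True,True,True,False,False,False,True,True],
  [False,True,False,True,False,False,True,True,True,True,True,True,False,False,False,True,False,True,False,False],
  [True,False,False,False,False,True,False,True,True,False,True,True,False,False,False,True,False,False,True,False],
  [False,False,True,True,True,False,True,False,True,True,False,True,True,True,False,True,True,True,True,True],
  [False,True,True,False,True,True,False,False,False,False,False,False,False,True,False,True,False,False,False,True],
  [True,False,False,False,True,True,True,False,False,True,False,False,False,False,False,True,False,False,True,False],
  [False,True,False,False,True,False,True,False,True,False,True,True,False,False,True,True,True,True,False,True],
  [True,True,True,True,True,True,False,False,False,True,True,False,True,True,False,True,True,False,False,True],
  [False,False,True,False,True,True,True,False,False,True,False,True,False,False,False,False,False,False,False,False],
  [True,True,False,True,False,False,True,False,False,False,True,False,False,True,False,True,False,False,True,True],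
  [True,False,False,True,False,False,True,True,False,False,True,False,True,False,False,True,False,False,True,True],
  [False,True,False,True,False,False,False,False,False,True,False,False,False,False,False,False,True,True,False,True],
  [False,False,True,False,True,True,True,True,True,True,True,False,True,True,False,True,True,False,True,True],
  [True,True,True,False,False,False,True,False,False,True,True,False,False,False,True,True,False,True,False,False],
  [False,True,True,False,True,False,True,False,False,True,False,False,False,False,True,False,True,True,True,False],
  [True,False,False,True,False,True,True,False,True,False,False,False,True,True,False,True,False,True,False,True],
  [False,False,False,True,False,False,True,True,False,True,True,False,True,True,True,True,False,False,True,True]]"

definition X20_8 :: "bool list" where
  "X20_8 = [False,False,False,False,False,False,False,False,True,False,False,False,False,False,False,False,False,False,False,False]"

lemma code20_8: "fsd_LCD_code_exists (20 + 20) 20 8"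
proof (rule block_list[where A="A20_8" and B="B20_8" and M="M20_8" and t=3 and xl="X20_8"])
  show "wfm 20 A20_8" by (simp add: wfm_def A20_8_def)
  show "wfm 20 B20_8" by (simp add: wfm_def B20_8_def)
  show "wfm 20 M20_8" by (simp add: wfm_def M20_8_def)
  show "transpose A20_8 = A20_8" by (simp add: A20_8_def)
  show "mulL 20 A20_8 B20_8 = idl 20"
    by (simp add: mulL_def idl_def A20_8_def B20_8_def upt_rec numeral_eq_Suc)
  show "mulL 20 (xorM (mulL 20 A20_8 A20_8) (idl 20)) M20_8 = idl 20"
    by (simp add: mulL_def idl_def xorM_def A20_8_def M20_8_def upt_rec numeral_eq_Suc)
  show "chk 8 3 (replicate 20 False) A20_8"
    by (simp only: A20_8_def numeral_eq_Suc pred_numeral_simps BitM.simps numeral_One One_nat_def replicate_Suc replicate_0 chk.simps chk2.simps xorl.simps geq.simps not_True_eq_False not_False_eq_True simp_thms)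
  show "chk 8 3 (replicate 20 False) B20_8"
    by (simp only: B20_8_def numeral_eq_Suc pred_numeral_simps BitM.simps numeral_One One_nat_def replicate_Suc replicate_0 chk.simps chk2.simps xorl.simps geq.simps not_True_eq_False not_False_eq_True simp_thms)
  show "8 \<le> 2 * 3 + (2::nat)" by simp
  show "length X20_8 = 20" by (simp add: X20_8_def)
  show "0 < cntl X20_8" by (simp add: X20_8_def)
  show "cntl X20_8 + cntl (sel X20_8 A20_8 (replicate 20 False)) = 8"
    by (simp add: X20_8_def A20_8_def numeral_eq_Suc)
qed

definition A25_9 :: "bool list list" where
  "A25_9 = [[True,True,False,True,False,True,False,True,False,False,True,False,True,False,False,False,True,True,False,False,True,False,True,False,True],
  [True,True,False,False,False,False,False,False,True,True,True,False,False,True,True,False,False,False,False,False,True,True,True,True,True],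
  [False,False,False,True,False,True,True,True,True,True,True,True,True,False,True,True,False,False,False,True,False,False,True,True,True],
  [True,False,True,True,True,False,False,False,True,False,True,True,False,False,True,False,False,True,False,False,True,False,False,False,False],
  [False,False,False,True,False,False,False,True,True,True,False,False,True,False,False,True,False,True,False,True,False,False,False,True,False],
  [True,False,True,False,False,False,True,False,False,False,False,True,False,False,True,False,True,True,True,True,False,False,True,False,True],
  [False,False,True,False,False,True,True,True,True,False,True,True,True,True,False,False,False,False,True,False,False,False,True,False,False],
  [True,False,True,False,True,False,True,False,False,False,True,False,False,False,True,True,True,False,True,False,False,False,False,False,True],
  [False,True,True,True,True,False,True,False,False,False,True,True,True,False,True,True,True,True,True,False,False,True,False,False,True],
  [False,True,True,False,True,False,False,False,False,True,True,False,False,False,False,False,True,False,True,False,False,True,True,False,False],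
  [True,True,True,True,False,False,True,True,True,True,False,True,True,True,True,False,False,False,False,False,True,False,False,False,False],
  [False,False,True,True,False,True,True,False,True,False,True,True,False,False,False,False,False,False,False,False,True,True,False,False,False],
  [True,False,True,False,True,False,True,False,True,False,True,False,True,False,True,True,True,False,False,True,True,False,True,False,False],
  [False,True,False,False,False,False,True,False,False,False,True,False,False,False,True,False,False,True,True,True,True,True,False,True,True],
  [False,True,True,True,False,True,False,True,True,False,True,False,True,True,False,False,True,False,False,False,False,False,False,False,True],
  [False,False,True,False,True,False,False,True,True,False,False,False,True,False,False,False,True,True,False,False,False,False,True,False,False],
  [True,False,False,False,False,True,False,True,True,True,False,False,True,False,True,True,True,True,False,False,True,False,True,False,True],
  [True,False,False,True,True,True,False,False,True,False,False,False,False,True,False,True,True,False,False,False,True,False,True,True,False],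
  [False,False,False,False,False,True,True,True,True,True,False,False,False,True,False,False,False,False,True,False,True,False,False,True,True],
  [False,False,True,False,True,True,False,False,False,False,False,False,True,True,False,False,False,False,False,True,True,True,True,True,False],
  [True,True,False,True,False,False,False,False,False,False,True,True,True,True,False,False,True,True,True,True,False,True,True,False,False],
  [False,True,False,False,False,False,False,False,True,True,False,True,False,True,False,False,False,False,False,True,True,False,False,True,False],
  [True,True,True,False,False,True,True,False,False,True,False,False,True,False,False,True,True,True,False,True,True,False,False,False,True],
  [False,True,True,False,True,False,False,False,False,False,False,False,False,True,False,False,False,True,True,True,False,True,False,True,True],
  [True,True,True,False,False,True,False,True,True,False,False,False,False,True,True,False,True,False,True,False,False,False,True,True,True]]"

definition B25_9 :: "bool list list" where
  "B25_9 = [[True,False,True,True,False,True,True,True,True,False,False,False,False,True,True,False,False,True,False,True,False,True,False,True,False],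
  [False,True,False,True,False,True,True,False,True,False,False,True,False,True,True,False,False,True,True,False,True,False,False,True,True],
  [True,False,True,True,False,True,True,False,True,True,False,False,False,False,True,False,False,False,False,False,True,False,False,True,False],
  [True,True,True,False,True,True,True,False,True,False,True,False,True,True,False,True,True,True,True,False,True,False,False,False,False],
  [False,False,False,True,True,False,True,True,False,True,False,False,False,True,True,True,True,True,True,True,False,False,False,True,False],
  [True,True,True,True,False,True,True,False,True,False,False,True,True,False,False,True,False,True,False,False,False,False,False,True,False],
  [True,True,True,True,True,True,True,True,False,False,True,True,True,False,True,False,True,False,True,False,True,True,True,True,False],
  [True,False,False,False,True,False,True,False,True,True,False,False,False,True,True,True,True,False,False,False,False,False,True,True,True],
  [True,True,True,True,False,True,False,True,False,False,False,True,True,True,False,False,False,False,True,False,False,False,True,True,True],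
  [False,False,True,False,True,False,False,True,False,True,True,False,False,False,True,True,False,False,False,False,False,False,True,True,True],
  [False,False,False,True,False,False,True,False,False,True,False,False,True,True,True,True,True,True,False,True,True,True,True,False,False],
  [False,True,False,False,False,True,True,False,True,False,False,True,True,True,False,False,False,False,False,True,False,True,False,True,True],
  [False,False,False,True,False,True,True,False,True,False,True,True,False,True,False,True,False,True,False,False,True,True,False,False,True],
  [True,True,False,True,True,False,False,True,True,False,True,True,True,True,True,True,False,False,False,False,True,True,False,True,True],
  [True,True,True,False,True,False,True,True,False,True,True,False,False,True,True,False,True,True,False,False,False,True,True,True,True],
  [False,False,False,True,True,True,False,True,False,True,True,False,True,True,False,True,False,False,True,True,True,False,False,False,False],
  [False,False,False,True,True,False,True,True,False,False,True,False,False,False,True,False,False,False,True,False,False,True,False,False,True],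
  [True,True,False,True,True,True,False,False,False,False,True,False,True,False,True,False,False,False,True,False,True,False,False,False,True],
  [False,True,False,True,True,False,True,False,True,False,False,False,False,False,False,True,True,True,False,True,False,True,False,True,False],
  [True,False,False,False,True,False,False,False,False,False,True,True,False,False,False,True,False,False,True,True,False,False,True,False,True],
  [False,True,True,True,False,False,True,False,False,False,True,False,True,True,False,True,False,True,False,False,False,False,True,False,False],
  [True,False,False,False,False,False,True,False,False,False,True,True,True,True,True,False,True,False,True,False,False,True,False,True,False],
  [False,False,False,False,False,False,True,True,True,True,True,False,False,False,True,False,False,False,False,True,True,False,False,False,True],
  [True,True,True,False,True,True,True,True,True,True,False,True,False,True,True,False,False,False,True,False,False,True,False,True,False],
  [False,True,False,False,False,False,False,True,True,True,False,True,True,True,True,False,True,True,False,True,False,False,True,False,False]]"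

definition M25_9 :: "bool list list" where
  "M25_9 = [[True,False,True,False,True,True,False,True,False,False,True,False,True,True,True,True,True,True,True,True,False,False,True,False,True],
  [False,True,False,True,True,True,True,False,True,True,False,False,True,False,True,False,False,True,True,False,False,True,False,True,True],
  [True,False,False,False,True,False,False,False,False,True,True,False,False,True,True,False,True,False,False,True,False,False,True,False,True],
  [False,True,False,False,True,True,False,True,False,False,False,True,True,True,False,True,True,False,True,False,True,True,True,True,True],
  [True,True,True,True,True,False,True,True,False,True,True,True,False,False,True,False,True,True,True,True,False,True,True,False,True],
  [True,True,False,True,False,False,False,False,False,False,True,True,False,False,False,False,True,False,True,False,True,False,False,False,True],
  [False,True,False,False,True,False,True,True,False,False,False,False,True,True,False,False,False,False,True,False,False,True,False,True,True],
  [True,False,False,True,True,False,True,True,True,True,False,False,True,True,True,False,False,False,True,False,False,True,False,False,True],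
  [False,True,False,False,False,False,False,True,True,True,True,True,True,True,False,False,False,False,True,True,False,True,False,False,False],
  [False,True,True,False,True,False,False,True,True,True,True,True,True,True,True,True,False,True,False,False,True,True,True,True,True],
  [True,False,True,False,True,True,False,False,True,True,False,True,True,True,False,True,False,True,False,True,False,False,True,True,True],
  [False,False,False,True,True,True,False,False,True,True,True,True,False,False,True,True,False,True,True,False,True,True,True,True,True],
  [True,True,False,True,False,False,True,True,True,True,True,False,False,True,False,False,True,False,False,True,False,True,False,False,False],
  [True,False,True,True,False,False,True,True,True,True,True,False,True,True,True,False,True,False,True,True,False,True,False,True,False],
  [True,True,True,False,True,False,False,True,False,True,False,True,False,True,True,False,False,False,False,False,False,True,True,True,False],
  [True,False,False,True,False,False,False,False,False,True,True,True,False,False,False,False,True,True,False,True,False,True,True,False,True],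
  [True,False,True,True,True,True,False,False,False,False,False,False,True,True,False,True,True,False,True,True,False,False,False,False,True],
  [True,True,False,False,True,False,False,False,False,True,True,True,False,False,False,True,False,False,False,False,False,False,True,True,True],
  [True,True,False,True,True,True,True,True,True,False,False,True,False,True,False,False,True,False,False,False,False,False,False,False,True],
  [True,False,True,False,True,False,False,False,True,False,True,False,True,True,False,True,True,False,False,False,True,False,False,False,False],
  [False,False,False,True,False,True,False,False,False,True,False,True,False,False,False,False,False,False,False,True,False,False,True,False,False],
  [False,True,False,True,True,False,True,True,True,True,False,True,True,True,True,True,False,False,False,False,False,True,True,False,True],
  [True,False,True,True,True,False,False,False,False,True,True,True,False,False,True,True,False,True,False,False,True,True,True,True,True],
  [False,True,False,True,False,False,True,False,False,True,True,True,False,True,True,False,False,True,False,False,False,False,True,True,False],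
  [True,True,True,True,True,True,True,True,False,True,True,True,False,False,False,True,True,True,True,False,False,True,True,False,True]]"

definition X25_9 :: "bool list" where
  "X25_9 = [False,False,False,False,False,False,False,False,False,False,False,False,False,False,False,True,False,False,False,False,False,False,False,False,False]"

lemma code25_9: "fsd_LCD_code_exists (25 + 25) 25 9"
proof (rule block_list[where A="A25_9" and B="B25_9" and M="M25_9" and t=4 and xl="X25_9"])
  show "wfm 25 A25_9" by (simp add: wfm_def A25_9_def)
  show "wfm 25 B25_9" by (simp add: wfm_def B25_9_def)
  show "wfm 25 M25_9" by (simp add: wfm_def M25_9_def)
  show "transpose A25_9 = A25_9" by (simp add: A25_9_def)
  show "mulL 25 A25_9 B25_9 = idl 25"
    by (simp add: mulL_def idl_def A25_9_def B25_9_def upt_rec numeral_eq_Suc)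
  show "mulL 25 (xorM (mulL 25 A25_9 A25_9) (idl 25)) M25_9 = idl 25"
    by (simp add: mulL_def idl_def xorM_def A25_9_def M25_9_def upt_rec numeral_eq_Suc)
  show "chk 9 4 (replicate 25 False) A25_9"
    by (simp only: A25_9_def numeral_eq_Suc pred_numeral_simps BitM.simps numeral_One One_nat_def replicate_Suc replicate_0 chk.simps chk2.simps xorl.simps geq.simps not_True_eq_False not_False_eq_True simp_thms)
  show "chk 9 4 (replicate 25 False) B25_9"
    by (simp only: B25_9_def numeral_eq_Suc pred_numeral_simps BitM.simps numeral_One One_nat_def replicate_Suc replicate_0 chk.simps chk2.simps xorl.simps geq.simps not_True_eq_False not_False_eq_True simp_thms)
  show "9 \<le> 2 * 4 + (2::nat)" by simp
  show "length X25_9 = 25" by (simp add: X25_9_def)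
  show "0 < cntl X25_9" by (simp add: X25_9_def)
  show "cntl X25_9 + cntl (sel X25_9 A25_9 (replicate 25 False)) = 9"
    by (simp add: X25_9_def A25_9_def numeral_eq_Suc)
qed

lemma scale:
  assumes "fsd_LCD_code_exists (m + m) m d" "1 \<le> s"
  shows "fsd_LCD_code_exists (4 * s * m) (2 * s * m) d"
proof -
  have "fsd_LCD_code_exists ((2 * s) * (m + m)) ((2 * s) * m) d"
    by (rule good_mult[OF assms(1)]) (use assms(2) in simp)
  moreover have "(2 * s) * (m + m) = 4 * s * m" by simp
  ultimately show ?thesis by simp
qed

theorem theorem6:
  shows "(\<forall>n1 n2 s::nat. 2 * n1 \<in> {24, 26, 28, 30, 32} \<longrightarrow> 2 * n2 \<in> {34, 36, 38} \<longrightarrow> s \<ge> 1 \<longrightarrow>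
            fsd_LCD_code_exists (4 * s * n1) (2 * s * n1) 6 \<and>
            fsd_LCD_code_exists (4 * s * n2) (2 * s * n2) 7)
       \<and> (\<forall>s::nat. s \<ge> 1 \<longrightarrow>
            fsd_LCD_code_exists (44 * s) (22 * s) 5 \<and>
            fsd_LCD_code_exists (80 * s) (40 * s) 8 \<and>
            fsd_LCD_code_exists (100 * s) (50 * s) 9)"
proof (intro conjI allI impI)
  fix n1 n2 s :: nat
  assume h1: "2 * n1 \<in> {24, 26, 28, 30, 32}" and h2: "2 * n2 \<in> {34, 36, 38}" and s: "1 \<le> s"
  from h1 have "n1 = 12 \<or> n1 = 13 \<or> n1 = 14 \<or> n1 = 15 \<or> n1 = 16" by auto
  thus "fsd_LCD_code_exists (4 * s * n1) (2 * s * n1) 6"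
    using scale[OF code12_6 s] scale[OF code13_6 s] scale[OF code14_6 s] scale[OF code15_6 s] scale[OF code16_6 s]
    by auto
  from h2 have "n2 = 17 \<or> n2 = 18 \<or> n2 = 19" by auto
  thus "fsd_LCD_code_exists (4 * s * n2) (2 * s * n2) 7"
    using scale[OF code17_7 s] scale[OF code18_7 s] scale[OF code19_7 s] by auto
next
  fix s :: nat assume s: "1 \<le> s"
  have "4 * s * 11 = 44 * s" "2 * s * 11 = 22 * s" by simp_all
  thus "fsd_LCD_code_exists (44 * s) (22 * s) 5" using scale[OF code11_5 s] by simp
  have "4 * s * 20 = 80 * s" "2 * s * 20 = 40 * s" by simp_all
  thus "fsd_LCD_code_exists (80 * s) (40 * s) 8" using scale[OF code20_8 s] by simp
  have "4 * s * 25 = 100 * s" "2 * s * 25 = 50 * s" by simp_all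
  thus "fsd_LCD_code_exists (100 * s) (50 * s) 9" using scale[OF code25_9 s] by simp
qed

end
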